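(* For every composition $I$ (of some integer $n\ge 1$), \[ \mathrm{PT}^A_I(q)\;=\;e_I(q)\;=\;\sum_{J\succeq I}\left(-\tfrac{1}{q}\right)^{\ell(I)-\ell(J)}q^{-\mathrm{st}'(I,J)}\,\mathrm{QFact}_A(J), \] where the sum runs over all compositions $J$ of $n$ coarser than or equal to $I$.
   Context: Compositions: a composition of $n$ is a sequence $I=(i_1,\dots,i_r)$ of positive integers with sum $n$; $\ell(I)=r$; $\mathrm{Des}(I)=\{i_1,i_1+i_2,\dots,i_1+\dots+i_{r-1}\}$. $I$ is finer than $J$ (equivalently $J$ is coarser than $I$), written $I\preceq J$ or $J\succeq I$, if $\mathrm{Des}(I)\supseteq\mathrm{Des}(J)$. For $I\preceq J$ set $\mathrm{st}'(I,J)=\#\{(a,b)\in\mathrm{Des}(I)\times\mathrm{Des}(J): a\le b\}$ and $\mathrm{st}(I,J)=\#\{(a,b)\in\mathrm{Des}(I)\times\mathrm{Des}(J): a\ge b\}$. $[m]_q=1+q+\dots+q^{m-1}$, and $\mathrm{QFact}_A(j_1,\dots,j_p)=[p]_q^{j_1}[p-1]_q^{j_2}\cdots[2]_q^{j_{p-1}}[1]_q^{j_p}$. Permutation tableaux: let $k\ge1$ and let $\lambda=(\lambda_1\ge\dots\ge\lambda_k\ge0)$ be a Young diagram with exactly $k$ rows (rows of length $0$ allowed) and exactly $n-k$ (nonempty) columns, drawn in French convention (rows left-justified, longest row at the bottom). Encode $\lambda$ by the composition $I=(i_1,\dots,i_k)$ of $n$ where, for $1\le t\le k$, $i_t-1$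 is the number of columns of length $k-t+1$; this is a bijection between such diagrams and compositions of $n$ with $k$ parts. A (type A) permutation tableau of shape $\lambda$ is a filling of the boxes of $\lambda$ with $0$'s and $1$'s such that (1) every column contains at least one $1$, and (2) no box containing a $0$ has both a $1$ below it in the same column and a $1$ to its left in the same row. Its rank is (number of $1$'s) minus (number of columns). $\mathrm{PT}^A_I(q)=\sum_T q^{\mathrm{rank}(T)}$, over permutation tableaux $T$ of the shape encoded by $I$. Algebraic setting: work over $\mathbb{K}(q)$, $\mathbb K$ a field of characteristic $0$. A packed word is a finite word over positive integers whose set of letters is $\{1,\dots,m\}$ for some $m$; $\mathrm{pack}(w)$ replaces each occurrence of the $t$-th smallest letter of $w$ by $t$. For a packed word $w=w_1\cdots w_n$: $\mathrm{DC}(w)$ is the composition of $n$ with descent set $\{i:w_i>w_{i+1}\}$; $\mathrm{WC}(w)$ is the composition of $n$ whose descent set is the set of positions $p<n$ such that the letter $w_p$ does not occur in $w_{p+1}\cdots w_n$; $\mathrm{sinv}(w)$ is the number of pairs $i<j$ with $w_i>w_j$ and $w_j$ not occurring in $w_{j+1}\cdots w_n$. $\mathbf{WQSym}$ is the vector space with basis $(\mathbf M_u)$ indexed by packed words, with product $\mathbf M_{u'}\mathbf M_{u''}=\sum\mathbf M_u$ over packed words $u=v\cdot w$ (concatenation) with $\mathrm{pack}(v)=u'$, $\mathrm{pack}(w)=u''$. The (associative) product $\star_q$ is the bilinear product with $\mathbf M_{u'}\star_q\mathbf M_{u''}=\sum q^{\mathrm{sinv}(u)-\mathrm{sinv}(u')-\mathrm{sinv}(u'')}\mathbf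 M_u$ over the same $u$. Let $\mathbf{Sym}$ be the quotient of $\mathbf{WQSym}$ by the span of all $\mathbf M_u-\mathbf M_v$ with $\mathrm{WC}(u)=\mathrm{WC}(v)$, $\zeta$ the quotient map, and $\Psi_I=\zeta(\mathbf M_u)$ for any $u$ with $\mathrm{WC}(u)=I$; $(\Psi_I)$ is a basis (this realizes noncommutative symmetric functions with Tevlin's monomial basis). Let $\tilde S_m=\sum\mathbf M_u$ over nondecreasing packed words $u$ of length $m$, and $S^{J}(q)=\zeta(\tilde S_{j_1}\star_q\cdots\star_q\tilde S_{j_l})$ for $J=(j_1,\dots,j_l)$. Let $L_J(q)=\sum_{I\preceq J}q^{\mathrm{st}(I,J)}\Psi_I$ (a basis). $e_I(q)$ denotes the coefficient of $L_I(q)$ in the expansion of $S^{(1^n)}(q)$, $(1^n)=(1,\dots,1)$. *)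

theory Defs
  imports Main
begin

definition is_comp :: "nat list \<Rightarrow> bool" where
  "is_comp I \<longleftrightarrow> (\<forall>x\<in>set I. 0 < x)"

definition comps :: "nat \<Rightarrow> nat list set" where
  "comps n = {I. is_comp I \<and> sum_list I = n}"

definition des_set :: "nat list \<Rightarrow> nat set" where
  "des_set I = {sum_list (take j I) | j. 1 \<le> j \<and> j < length I}"

definition finer :: "nat list \<Rightarrow> nat list \<Rightarrow> bool" where
  "finer I J \<longleftrightarrow> des_set J \<subseteq> des_set I"

definition st' :: "nat list \<Rightarrow> nat list \<Rightarrow> nat" where
  "st' I J = card {(a, b). a \<in> des_set I \<and> b \<in> des_set J \<and> a \<le> b}"

definition st :: "nat list \<Rightarrow> nat list \<Rightarrow> nat" where
  "st I J = card {(a, b). a \<in> des_set I \<and> b \<in> des_set J \<and> a \<ge> b}"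

fun diffs :: "nat \<Rightarrow> nat list \<Rightarrow> nat list" where
  "diffs p [] = []"
| "diffs p (x # xs) = (x - p) # diffs x xs"

definition comp_of_des :: "nat \<Rightarrow> nat set \<Rightarrow> nat list" where
  "comp_of_des n D = diffs 0 (sorted_list_of_set ((D \<inter> {1..<n}) \<union> {n}))"

definition qint :: "'a::field \<Rightarrow> nat \<Rightarrow> 'a" where
  "qint q m = (\<Sum>i<m. q ^ i)"

definition QFactA :: "'a::field \<Rightarrow> nat list \<Rightarrow> 'a" where
  "QFactA q J = (\<Prod>t<length J. qint q (length J - t) ^ (J ! t))"

text \<open>French convention: box (c, r) = column c (0-based, from the left),
  row r (0-based, from the bottom).\<close>
definition col_lengths :: "nat list \<Rightarrow> nat list" where
  "col_lengths I = concat (map (\<lambda>t. replicate (I ! t - 1) (length I - t)) [0..<length I])"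

definition shape :: "nat list \<Rightarrow> (nat \<times> nat) set" where
  "shape I = {(c, r). c < length (col_lengths I) \<and> r < col_lengths I ! c}"

text \<open>A filling is given by the set T of boxes containing 1.\<close>
definition perm_tableau :: "nat list \<Rightarrow> (nat \<times> nat) set \<Rightarrow> bool" where
  "perm_tableau I T \<longleftrightarrow>
     T \<subseteq> shape I \<and>
     (\<forall>c < length (col_lengths I). \<exists>r. (c, r) \<in> T) \<and>
     (\<forall>c r. (c, r) \<in> shape I \<and> (c, r) \<notin> T \<longrightarrow>
        \<not> ((\<exists>r' < r. (c, r') \<in> T) \<and> (\<exists>c' < c. (c', r) \<in> T)))"

definition tab_rank :: "nat list \<Rightarrow> (nat \<times> nat) set \<Rightarrow> nat" where
  "tab_rank I T = card T - length (col_lengths I)"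

definition PTA :: "'a::field \<Rightarrow> nat list \<Rightarrow> 'a" where
  "PTA q I = (\<Sum>T \<in> {T. perm_tableau I T}. q ^ tab_rank I T)"

definition packed :: "nat list \<Rightarrow> bool" where
  "packed u \<longleftrightarrow> set u = {1..card (set u)}"

definition pack :: "nat list \<Rightarrow> nat list" where
  "pack w = map (\<lambda>x. card {y \<in> set w. y \<le> x}) w"

definition wdes :: "nat list \<Rightarrow> nat set" where
  "wdes u = {p. 1 \<le> p \<and> p < length u \<and> u ! (p - 1) \<notin> set (drop p u)}"

definition WC :: "nat list \<Rightarrow> nat list" where
  "WC u = comp_of_des (length u) (wdes u)"

definition sinv :: "nat list \<Rightarrow> nat" where
  "sinv u = card {(i, j). i < j \<and> j < length u \<and> u ! i > u ! j \<and> u ! j \<notin> set (drop (Suc j) u)}"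

text \<open>Elements of WQSym (over the field) are represented by their coefficient
  functions on packed words: f u is the coefficient of M_u (values at
  non-packed words are irrelevant).\<close>
type_synonym 'a wqsym = "nat list \<Rightarrow> 'a"

text \<open>Bilinear extension of M_{u'} *_q M_{u''} = sum q^(sinv u - sinv u' - sinv u'') M_u.\<close>
definition star_q :: "'a::field \<Rightarrow> 'a wqsym \<Rightarrow> 'a wqsym \<Rightarrow> 'a wqsym" where
  "star_q q f g = (\<lambda>u. if packed u then
      (\<Sum>k\<le>length u. f (pack (take k u)) * g (pack (drop k u)) *
         q powi (int (sinv u) - int (sinv (pack (take k u))) - int (sinv (pack (drop k u)))))
    else 0)"

definition unitM :: "'a::field wqsym" where
  "unitM = (\<lambda>u. if u = [] then 1 else 0)"

definition tildeS :: "nat \<Rightarrow> 'a::field wqsym" where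
  "tildeS m = (\<lambda>u. if packed u \<and> length u = m \<and> sorted u then 1 else 0)"

definition star_list :: "'a::field \<Rightarrow> 'a wqsym list \<Rightarrow> 'a wqsym" where
  "star_list q fs = foldr (star_q q) fs unitM"

text \<open>zeta f, given by its coefficients on Psi_I: sum of the coefficients of all
  M_u with WC(u) = I.\<close>
definition zeta :: "'a::field wqsym \<Rightarrow> nat list \<Rightarrow> 'a" where
  "zeta f I = (\<Sum>u \<in> {u. packed u \<and> length u = sum_list I \<and> WC u = I}. f u)"

definition SJ :: "'a::field \<Rightarrow> nat list \<Rightarrow> nat list \<Rightarrow> 'a" where
  "SJ q J = zeta (star_list q (map tildeS J))"

text \<open>Coefficient of Psi_I in L_J(q) = sum_{I \<preceq> J} q^st(I,J) Psi_I.\<close>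
definition Lcoef :: "'a::field \<Rightarrow> nat list \<Rightarrow> nat list \<Rightarrow> 'a" where
  "Lcoef q J I = (if is_comp I \<and> sum_list I = sum_list J \<and> finer I J then q ^ st I J else 0)"

text \<open>e_I(q): coefficient of L_I(q) in the expansion of S^(1^n)(q), n = |I|.\<close>
definition eA :: "'a::field \<Rightarrow> nat list \<Rightarrow> 'a" where
  "eA q I = (let n = sum_list I in
     (THE c. (\<forall>J. J \<notin> comps n \<longrightarrow> c J = 0) \<and>
             (\<forall>K \<in> comps n. (\<Sum>J \<in> comps n. c J * Lcoef q J K) = SJ q (replicate n 1) K)) I)"

definition RHS :: "'a::field \<Rightarrow> nat list \<Rightarrow> 'a" where
  "RHS q I = (\<Sum>J \<in> {J \<in> comps (sum_list I). finer I J}.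
      (- 1 / q) ^ (length I - length J) * (1 / q) ^ st' I J * QFactA q J)"

end

theory Submission
  imports Defs
begin


lemma des_set_Nil[simp]: "des_set [] = {}"
  by (auto simp: des_set_def)

lemma des_set_single[simp]: "des_set [a] = {}"
  by (auto simp: des_set_def)

lemma des_set_Cons: "r \<noteq> [] \<Longrightarrow> des_set (a # r) = insert a ((+) a ` des_set r)"
proof -
  assume r: "r \<noteq> []"
  show ?thesis
  proof (rule set_eqI, rule iffI)
    fix x assume "x \<in> des_set (a # r)"
    then obtain j where j: "x = sum_list (take j (a#r))" "1 \<le> j" "j < length (a#r)"
      by (auto simp: des_set_def)
    show "x \<in> insert a ((+) a ` des_set r)"
    proof (cases "j = 1")
      case True thus ?thesis using j by simp
    next
      case False
      then obtain j' where "j = Suc j'" "1 \<le> j'" using j by (cases j) auto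
      thus ?thesis using j by (auto simp: des_set_def)
    qed
  next
    fix x assume "x \<in> insert a ((+) a ` des_set r)"
    then show "x \<in> des_set (a # r)"
    proof
      assume "x = a" thus ?thesis using r unfolding des_set_def
        by (intro CollectI exI[of _ 1]) (auto)
    next
      assume "x \<in> (+) a ` des_set r"
      then obtain j where "x = a + sum_list (take j r)" "1 \<le> j" "j < length r"
        by (auto simp: des_set_def)
      thus ?thesis unfolding des_set_def
        by (intro CollectI exI[of _ "Suc j"]) auto
    qed
  qed
qed

fun incf :: "nat list \<Rightarrow> nat list" where
  "incf [] = []"
| "incf (a # r) = Suc a # r"

lemma is_comp_Cons[simp]: "is_comp (a # r) \<longleftrightarrow> 0 < a \<and> is_comp r"
  by (auto simp: is_comp_def)

lemma is_comp_Nil[simp]: "is_comp []"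
  by (auto simp: is_comp_def)

lemma des_set_pos: "is_comp J \<Longrightarrow> x \<in> des_set J \<Longrightarrow> 0 < x"
  unfolding des_set_def is_comp_def
proof clarify
  fix j assume "\<forall>x\<in>set J. 0 < x" "1 \<le> j" "j < length J"
  then have "J ! 0 \<in> set (take j J)" by (auto simp: in_set_conv_nth intro!: exI[of _ 0])
  then have "0 < sum_list (take j J)" using \<open>\<forall>x\<in>set J. 0 < x\<close>
    by (metis elem_le_sum_list gr0I in_set_conv_nth in_set_takeD le_zero_eq nth_mem)
  thus "0 < sum_list (take j J)" .
qed

lemma des_set_bound: "x \<in> des_set J \<Longrightarrow> is_comp J \<Longrightarrow> x < sum_list J"
  unfolding des_set_def is_comp_def
proof clarify
  fix j assume a: "\<forall>x\<in>set J. 0 < x" "1 \<le> j" "j < length J"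
  have "sum_list J = sum_list (take j J) + sum_list (drop j J)"
    by (metis append_take_drop_id sum_list_append)
  moreover have "J ! j \<le> sum_list (drop j J)" using elem_le_sum_list[of 0 "drop j J"] a by simp
  moreover have "0 < J ! j" using a by simp
  ultimately show "sum_list (take j J) < sum_list J" by simp
qed

lemma finite_des_set[simp]: "finite (des_set J)"
  unfolding des_set_def by (rule finite_subset[of _ "(\<lambda>j. sum_list (take j J)) ` {..<length J}"]) auto

lemma des_set_1Cons: "J \<noteq> [] \<Longrightarrow> des_set (1 # J) = insert 1 (Suc ` des_set J)"
  by (simp add: des_set_Cons)

lemma des_set_incf: "J \<noteq> [] \<Longrightarrow> des_set (incf J) = Suc ` des_set J"
  by (cases J; cases "tl J") (auto simp: des_set_Cons image_image)

lemma card_des_set: "is_comp J \<Longrightarrow> J \<noteq> [] \<Longrightarrow> card (des_set J) + 1 = length J"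
proof (induction J)
  case Nil thus ?case by simp
next
  case (Cons a r)
  show ?case
  proof (cases "r = []")
    case True thus ?thesis by simp
  next
    case False
    have "a \<notin> (+) a ` des_set r" using des_set_pos[of r] Cons.prems by fastforce
    moreover have "card ((+) a ` des_set r) = card (des_set r)" by (simp add: card_image)
    ultimately show ?thesis using Cons False by (simp add: des_set_Cons)
  qed
qed

lemma comps_0: "comps 0 = {[]}"
proof (rule set_eqI)
  fix xs show "xs \<in> comps 0 \<longleftrightarrow> xs \<in> {[]}" by (cases xs) (auto simp: comps_def is_comp_def)
qed

lemma comps_nonempty: "J \<in> comps n \<Longrightarrow> 0 < n \<Longrightarrow> J \<noteq> []"
  by (auto simp: comps_def)

lemma finite_comps[simp]: "finite (comps n)"
proof -
  have "comps n \<subseteq> {xs. set xs \<subseteq> {0..n} \<and> length xs \<le> n}"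
  proof clarify
    fix xs assume "xs \<in> comps n"
    hence p: "\<forall>x\<in>set xs. 0 < x" and s: "sum_list xs = n" by (auto simp: comps_def is_comp_def)
    have "length xs \<le> sum_list xs" using p
      by (induction xs) auto
    moreover have "\<forall>x\<in>set xs. x \<le> sum_list xs" by (simp add: member_le_sum_list)
    ultimately show "set xs \<subseteq> {0..n} \<and> length xs \<le> n" using s by auto
  qed
  thus ?thesis by (rule finite_subset) (rule finite_lists_length_le, simp)
qed

lemma comps_Suc: "0 < n \<Longrightarrow> comps (Suc n) = (\<lambda>J. 1 # J) ` comps n \<union> incf ` comps n"
proof (rule set_eqI, rule iffI)
  fix K assume n: "0 < n" and K: "K \<in> comps (Suc n)"
  then obtain a r where Kar: "K = a # r" by (cases K) (auto simp: comps_def)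
  show "K \<in> (\<lambda>J. 1 # J) ` comps n \<union> incf ` comps n"
  proof (cases "a = 1")
    case True thus ?thesis using K Kar by (auto simp: comps_def)
  next
    case False
    then obtain b where "a = Suc b" "0 < b" using K Kar by (cases a) (auto simp: comps_def)
    then have "K = incf (b # r)" "b # r \<in> comps n" using K Kar by (auto simp: comps_def)
    thus ?thesis by blast
  qed
next
  fix K assume n: "0 < n" and K: "K \<in> (\<lambda>J. 1 # J) ` comps n \<union> incf ` comps n"
  from K show "K \<in> comps (Suc n)"
  proof
    assume "K \<in> (\<lambda>J. 1 # J) ` comps n" thus ?thesis by (auto simp: comps_def)
  next
    assume "K \<in> incf ` comps n"
    then obtain J where J: "J \<in> comps n" "K = incf J" by blast
    then obtain a r where "J = a # r" using n by (cases J) (auto simp: comps_def)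
    thus ?thesis using J by (auto simp: comps_def)
  qed
qed

lemma sum_comps_Suc:
  assumes "0 < n"
  shows "(\<Sum>K\<in>comps (Suc n). f K) = (\<Sum>J\<in>comps n. f (1 # J) + f (incf J))"
proof -
  have inj1: "inj_on (\<lambda>J. 1 # J) (comps n)" by (auto intro: inj_onI)
  have inj2: "inj_on incf (comps n)"
  proof (rule inj_onI)
    fix x y assume "x \<in> comps n" "y \<in> comps n" "incf x = incf y"
    thus "x = y" using assms by (cases x; cases y) (auto simp: comps_def)
  qed
  have disj: "(\<lambda>J. 1 # J) ` comps n \<inter> incf ` comps n = {}"
  proof -
    { fix J J' assume "J \<in> comps n" "J' \<in> comps n" "1 # J = incf J'"
      hence False using assms by (cases J') (auto simp: comps_def) }
    thus ?thesis by blast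
  qed
  have "(\<Sum>K\<in>comps (Suc n). f K) = (\<Sum>K\<in>(\<lambda>J. 1 # J) ` comps n. f K) + (\<Sum>K\<in>incf ` comps n. f K)"
    unfolding comps_Suc[OF assms] by (rule sum.union_disjoint) (use disj in auto)
  also have "\<dots> = (\<Sum>J\<in>comps n. f (1 # J)) + (\<Sum>J\<in>comps n. f (incf J))"
    by (subst sum.reindex[OF inj1], subst sum.reindex[OF inj2]) (simp add: o_def)
  finally show ?thesis by (simp add: sum.distrib)
qed

lemma comps_1: "comps 1 = {[1]}"
proof -
  have "comps (Suc 0) = {[1]}"
  proof (rule set_eqI, rule iffI)
    fix K assume K: "K \<in> comps (Suc 0)"
    then obtain a r where Kar: "K = a # r" by (cases K) (auto simp: comps_def)
    then have h: "0 < a" "a + sum_list r = 1" "is_comp r" using K by (auto simp: comps_def)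
    then have "a = 1" "sum_list r = 0" by arith+
    then have "r = []" using h(3) by (cases r) (auto)
    thus "K \<in> {[1]}" using Kar \<open>a = 1\<close> by simp
  qed (auto simp: comps_def)
  thus ?thesis by simp
qed

definition stS :: "nat set \<Rightarrow> nat set \<Rightarrow> nat" where
  "stS A B = card {(a, b). a \<in> A \<and> b \<in> B \<and> a \<ge> b}"

definition stS' :: "nat set \<Rightarrow> nat set \<Rightarrow> nat" where
  "stS' A B = card {(a, b). a \<in> A \<and> b \<in> B \<and> a \<le> b}"

lemma st_stS: "st I J = stS (des_set I) (des_set J)"
  by (simp add: st_def stS_def)

lemma st'_stS': "st' I J = stS' (des_set I) (des_set J)"
  by (simp add: st'_def stS'_def)

lemma card_Suc_pairs:
  "card {(a, b). a \<in> Suc ` A \<and> b \<in> Suc ` B \<and> R a b} = card {(a, b). a \<in> A \<and> b \<in> B \<and> R (Suc a) (Suc b)}"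
proof -
  have "{(a, b). a \<in> Suc ` A \<and> b \<in> Suc ` B \<and> R a b} = map_prod Suc Suc ` {(a, b). a \<in> A \<and> b \<in> B \<and> R (Suc a) (Suc b)}"
    by (auto simp: image_iff)
  moreover have "inj (map_prod Suc Suc)" by (auto intro!: injI)
  ultimately show ?thesis by (simp add: card_image inj_on_subset)
qed

lemma pairs_finite: "finite A \<Longrightarrow> finite B \<Longrightarrow> finite {(a, b). a \<in> A \<and> b \<in> B \<and> P a b}"
  by (rule finite_subset[of _ "A \<times> B"]) auto

lemma stS_Suc: "stS (Suc ` A) (Suc ` B) = stS A B"
  unfolding stS_def by (subst card_Suc_pairs) simp

lemma stS'_Suc: "stS' (Suc ` A) (Suc ` B) = stS' A B"
  unfolding stS'_def by (subst card_Suc_pairs) simp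

lemma stS_1_Suc: "0 \<notin> B \<Longrightarrow> stS (insert 1 (Suc ` A)) (Suc ` B) = stS A B"
proof -
  assume B: "0 \<notin> B"
  have "{(a, b). a \<in> insert 1 (Suc ` A) \<and> b \<in> Suc ` B \<and> a \<ge> b} = {(a, b). a \<in> Suc ` A \<and> b \<in> Suc ` B \<and> a \<ge> b}"
  proof (rule set_eqI, rule iffI)
    fix x assume x: "x \<in> {(a, b). a \<in> insert 1 (Suc ` A) \<and> b \<in> Suc ` B \<and> a \<ge> b}"
    then obtain a b' where ab: "x = (a, Suc b')" "b' \<in> B" "a \<in> insert 1 (Suc ` A)" "a \<ge> Suc b'" by auto
    have "b' \<noteq> 0" proof assume "b' = 0" with ab(2) have "0 \<in> B" by simp with B show False by simp qed
    hence "a \<noteq> 1" using ab by auto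
    thus "x \<in> {(a, b). a \<in> Suc ` A \<and> b \<in> Suc ` B \<and> a \<ge> b}" using ab by auto
  qed auto
  thus ?thesis unfolding stS_def by (simp add: stS_Suc[unfolded stS_def])
qed

lemma stS_1_1:
  assumes "finite A" "finite B" "0 \<notin> A" "0 \<notin> B"
  shows "stS (insert 1 (Suc ` A)) (insert 1 (Suc ` B)) = stS A B + card A + 1"
proof -
  let ?X = "{(a, b). a \<in> insert 1 (Suc ` A) \<and> b \<in> insert 1 (Suc ` B) \<and> a \<ge> b}"
  let ?Y = "{(a, b). a \<in> Suc ` A \<and> b \<in> Suc ` B \<and> a \<ge> b}"
  let ?Z = "(\<lambda>a. (a, 1::nat)) ` insert 1 (Suc ` A)"
  have e1: "?X = ?Y \<union> ?Z" using assms by auto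
  have e2: "?Y \<inter> ?Z = {}" using assms by auto
  have f1: "finite ?Y" by (intro pairs_finite) (use assms in auto)
  have f2: "finite ?Z" using assms by auto
  have cZ: "card ?Z = card A + 1"
  proof -
    have "card ?Z = card (insert 1 (Suc ` A))" by (rule card_image) (auto intro: inj_onI)
    also have "\<dots> = card A + 1" using assms by (auto simp: card_image card_insert_if)
    finally show ?thesis .
  qed
  have "card ?X = card ?Y + card ?Z" unfolding e1 by (rule card_Un_disjoint[OF f1 f2 e2])
  hence "card ?X = card ?Y + card A + 1" using cZ by simp
  thus ?thesis unfolding stS_def by (simp add: stS_Suc[unfolded stS_def])
qed

lemma stS'_1_Suc:
  assumes "finite A" "finite B" "0 \<notin> A" "0 \<notin> B"
  shows "stS' (insert 1 (Suc ` A)) (Suc ` B) = stS' A B + card B"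
proof -
  let ?X = "{(a, b). a \<in> insert 1 (Suc ` A) \<and> b \<in> Suc ` B \<and> a \<le> b}"
  let ?Y = "{(a, b). a \<in> Suc ` A \<and> b \<in> Suc ` B \<and> a \<le> b}"
  let ?Z = "(\<lambda>b. (1::nat, b)) ` Suc ` B"
  have e1: "?X = ?Y \<union> ?Z" using assms by auto
  have e2: "?Y \<inter> ?Z = {}" using assms by auto
  have f1: "finite ?Y" by (intro pairs_finite) (use assms in auto)
  have f2: "finite ?Z" using assms by auto
  have cZ: "card ?Z = card B"
    by (subst card_image) (auto intro: inj_onI simp: card_image)
  have "card ?X = card ?Y + card ?Z" unfolding e1 by (rule card_Un_disjoint[OF f1 f2 e2])
  hence "card ?X = card ?Y + card B" using cZ by simp
  thus ?thesis unfolding stS'_def by (simp add: stS'_Suc[unfolded stS'_def])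
qed

lemma stS'_1_1:
  assumes "finite A" "finite B" "0 \<notin> A" "0 \<notin> B"
  shows "stS' (insert 1 (Suc ` A)) (insert 1 (Suc ` B)) = stS' A B + card B + 1"
proof -
  let ?X = "{(a, b). a \<in> insert 1 (Suc ` A) \<and> b \<in> insert 1 (Suc ` B) \<and> a \<le> b}"
  let ?Y = "{(a, b). a \<in> insert 1 (Suc ` A) \<and> b \<in> Suc ` B \<and> a \<le> b}"
  have "?X = insert (1,1) ?Y" using assms by auto
  moreover have "(1,1) \<notin> ?Y" using assms by auto
  moreover have "finite ?Y" by (intro pairs_finite) (use assms in auto)
  ultimately have "card ?X = card ?Y + 1" by simp
  thus ?thesis using stS'_1_Suc[OF assms] unfolding stS'_def by simp
qed

lemma QFactA_1Cons: "QFactA q (1 # J) = qint q (length J + 1) * QFactA q J"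
  unfolding QFactA_def length_Cons prod.lessThan_Suc_shift by simp

lemma QFactA_incf: "J \<noteq> [] \<Longrightarrow> QFactA q (incf J) = qint q (length J) * QFactA q J"
proof -
  assume "J \<noteq> []"
  then obtain a r where J: "J = a # r" by (cases J) auto
  show ?thesis unfolding J QFactA_def incf.simps length_Cons prod.lessThan_Suc_shift by simp
qed

lemma QFactA_single: "QFactA q [a] = 1"
  by (simp add: QFactA_def qint_def)

lemma des_set_gt_hd: "is_comp (a # r) \<Longrightarrow> x \<in> des_set (a # r) \<Longrightarrow> a \<le> x"
  by (cases "r = []") (auto simp: des_set_Cons)

lemma des_set_inj:
  "is_comp J \<Longrightarrow> is_comp K \<Longrightarrow> sum_list J = sum_list K \<Longrightarrow> des_set J = des_set K \<Longrightarrow> J = K"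
proof (induction J arbitrary: K)
  case Nil thus ?case by (cases K) auto
next
  case (Cons a r K)
  obtain b s where K: "K = b # s" using Cons.prems by (cases K) auto
  show ?case
  proof (cases "r = []")
    case True
    have "s = []"
    proof (rule ccontr)
      assume "s \<noteq> []"
      hence "b \<in> des_set K" using K by (simp add: des_set_Cons)
      thus False using Cons.prems(4) True by simp
    qed
    thus ?thesis using True Cons.prems K by simp
  next
    case False
    have dJ: "des_set (a # r) = insert a ((+) a ` des_set r)" using False by (simp add: des_set_Cons)
    have "s \<noteq> []"
    proof
      assume "s = []"
      hence "des_set K = {}" using K by simp
      thus False using Cons.prems(4) dJ by simp
    qed
    have dK: "des_set K = insert b ((+) b ` des_set s)" using K \<open>s \<noteq> []\<close> by (simp add: des_set_Cons)
    have cK: "is_comp (b # s)" using Cons.prems(2) K by simp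
    have cJ: "is_comp (a # r)" using Cons.prems(1) by simp
    have "a \<in> des_set K" using Cons.prems(4) dJ by blast
    hence "b \<le> a" using des_set_gt_hd[OF cK] K by blast
    moreover have "b \<in> des_set (a # r)" using Cons.prems(4) dK by blast
    hence "a \<le> b" using des_set_gt_hd[OF cJ] by blast
    ultimately have ab: "a = b" by simp
    have z: "0 \<notin> des_set r" "0 \<notin> des_set s" using des_set_pos[of r] des_set_pos[of s] cJ cK by auto
    have p0: "a \<notin> (+) a ` des_set r" "a \<notin> (+) a ` des_set s" using z by auto
    have "insert a ((+) a ` des_set r) = insert a ((+) a ` des_set s)"
      using Cons.prems(4) dJ dK ab by simp
    hence "(+) a ` des_set r = (+) a ` des_set s" using insert_ident[OF p0] by simp
    hence "des_set r = des_set s" by (simp add: inj_image_eq_iff)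
    moreover have "sum_list r = sum_list s" using Cons.prems(3) K ab by simp
    ultimately have "r = s" using Cons.IH cJ cK by simp
    thus ?thesis using K ab by simp
  qed
qed

lemma des_set_diffs:
  "sorted_wrt (<) xs \<Longrightarrow> (\<forall>x\<in>set xs. p < x) \<Longrightarrow>
    des_set (diffs p xs) = (\<lambda>x. x - p) ` set (butlast xs) \<and> is_comp (diffs p xs) \<and>
    (xs \<noteq> [] \<longrightarrow> sum_list (diffs p xs) = last xs - p) \<and> length (diffs p xs) = length xs"
proof (induction xs arbitrary: p)
  case Nil thus ?case by simp
next
  case (Cons x xs p)
  have IH: "des_set (diffs x xs) = (\<lambda>y. y - x) ` set (butlast xs) \<and> is_comp (diffs x xs) \<and>
    (xs \<noteq> [] \<longrightarrow> sum_list (diffs x xs) = last xs - x) \<and> length (diffs x xs) = length xs"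
    using Cons by auto
  show ?case
  proof (cases "xs = []")
    case True thus ?thesis using Cons.prems by simp
  next
    case False
    have gt: "\<forall>y\<in>set xs. x < y" using Cons.prems by simp
    have "diffs x xs \<noteq> []" using False by (cases xs) auto
    hence "des_set (diffs p (x # xs)) = insert (x - p) ((+) (x - p) ` (\<lambda>y. y - x) ` set (butlast xs))"
      using IH by (simp add: des_set_Cons)
    also have "(+) (x - p) ` (\<lambda>y. y - x) ` set (butlast xs) = (\<lambda>y. y - p) ` set (butlast xs)"
    proof -
      have "\<And>y. y \<in> set (butlast xs) \<Longrightarrow> x - p + (y - x) = y - p"
        using gt Cons.prems(2) by (fastforce dest: in_set_butlastD)
      thus ?thesis unfolding image_image by (intro image_cong) auto
    qed
    finally have "des_set (diffs p (x # xs)) = (\<lambda>y. y - p) ` set (butlast (x # xs))" using False by simp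
    moreover have "sum_list (diffs p (x # xs)) = last (x # xs) - p"
    proof -
      have xl: "x < last xs" using gt False by simp
      have "sum_list (diffs p (x # xs)) = (x - p) + (last xs - x)" using IH False by simp
      also have "\<dots> = last xs - p" using xl Cons.prems(2) by simp
      finally show ?thesis using False by simp
    qed
    ultimately show ?thesis using IH Cons.prems by auto
  qed
qed

lemma comp_of_des_props:
  assumes "0 < n"
  shows "comp_of_des n D \<in> comps n \<and> des_set (comp_of_des n D) = D \<inter> {1..<n}"
proof -
  define D' where "D' = D \<inter> {1..<n}"
  define ys where "ys = sorted_list_of_set D' @ [n]"
  have fD: "finite D'" by (simp add: D'_def)
  have sD: "set (sorted_list_of_set D') = D'" using fD by simp
  have sw: "sorted_wrt (<) ys"
    unfolding ys_def sorted_wrt_append using sD by (auto simp: D'_def)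
  have setys: "set ys = D' \<union> {n}" using sD by (simp add: ys_def)
  have dys: "distinct ys" using sw by (simp add: strict_sorted_iff)
  have "sorted_list_of_set (D' \<union> {n}) = ys"
  proof -
    have "length ys = card (D' \<union> {n})" using dys setys by (metis distinct_card)
    thus ?thesis using sorted_list_of_set_unique[of "D' \<union> {n}" ys] sw setys fD by simp
  qed
  hence cod: "comp_of_des n D = diffs 0 ys" by (simp add: comp_of_des_def D'_def)
  have pos: "\<forall>x\<in>set ys. 0 < x" using assms setys by (auto simp: D'_def)
  have ne: "ys \<noteq> []" by (simp add: ys_def)
  have lastn: "last ys = n" by (simp add: ys_def)
  have bl: "set (butlast ys) = D'" using sD by (simp add: ys_def)
  from des_set_diffs[OF sw pos] ne lastn bl show ?thesis
    unfolding cod comps_def D'_def by simp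
qed

lemma comp_of_des_des_set:
  assumes "K \<in> comps n" "0 < n"
  shows "comp_of_des n (des_set K) = K"
proof -
  have "des_set K \<subseteq> {1..<n}" using assms des_set_pos des_set_bound by (fastforce simp: comps_def)
  then have "des_set (comp_of_des n (des_set K)) = des_set K" using comp_of_des_props[OF assms(2)] by auto
  thus ?thesis using des_set_inj comp_of_des_props[OF assms(2), of "des_set K"] assms(1) by (simp add: comps_def)
qed

lemma zero_notin_des: "is_comp J \<Longrightarrow> 0 \<notin> des_set J"
  using des_set_pos by blast

lemma finer_1_1: "is_comp K \<Longrightarrow> is_comp J \<Longrightarrow> K \<noteq> [] \<Longrightarrow> J \<noteq> [] \<Longrightarrow> finer (1 # K) (1 # J) \<longleftrightarrow> finer K J"
  unfolding finer_def des_set_1Cons by (auto dest: zero_notin_des)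

lemma finer_1_inc: "is_comp K \<Longrightarrow> is_comp J \<Longrightarrow> K \<noteq> [] \<Longrightarrow> J \<noteq> [] \<Longrightarrow> finer (1 # K) (incf J) \<longleftrightarrow> finer K J"
  unfolding finer_def des_set_1Cons des_set_incf by (auto dest: zero_notin_des)

lemma finer_inc_1: "is_comp K \<Longrightarrow> is_comp J \<Longrightarrow> K \<noteq> [] \<Longrightarrow> J \<noteq> [] \<Longrightarrow> \<not> finer (incf K) (1 # J)"
  unfolding finer_def des_set_1Cons des_set_incf by (auto dest: zero_notin_des)

lemma finer_inc_inc: "is_comp K \<Longrightarrow> is_comp J \<Longrightarrow> K \<noteq> [] \<Longrightarrow> J \<noteq> [] \<Longrightarrow> finer (incf K) (incf J) \<longleftrightarrow> finer K J"
  unfolding finer_def des_set_incf by (auto dest: zero_notin_des)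

lemma is_comp_incf: "is_comp J \<Longrightarrow> is_comp (incf J)"
  by (cases J) auto

lemma length_incf[simp]: "length (incf J) = length J"
  by (cases J) auto

lemma sum_incf: "J \<noteq> [] \<Longrightarrow> sum_list (incf J) = Suc (sum_list J)"
  by (cases J) auto


lemma qint_0[simp]: "qint q 0 = 0" by (simp add: qint_def)
lemma qint_Suc: "qint q (Suc m) = qint q m + q ^ m" by (simp add: qint_def)
lemma qint_1[simp]: "qint q 1 = 1" by (simp add: qint_def)
lemma qint_Suc0[simp]: "qint q (Suc 0) = 1" by (simp add: qint_def)
lemma qint_add: "qint q (a + b) = qint q a + q ^ a * qint q b"
  by (induction b) (simp_all add: qint_Suc algebra_simps power_add)
lemma qint_Suc': "qint q (Suc m) = 1 + q * qint q m"
  using qint_add[of q 1 m] by simp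

fun Pq :: "'a::field \<Rightarrow> nat \<Rightarrow> nat \<Rightarrow> 'a" where
  "Pq q 0 b = 1"
| "Pq q (Suc a) 0 = 1"
| "Pq q (Suc a) (Suc b) = Pq q a (Suc b) + q ^ (Suc a) * Pq q (Suc a) b"

lemma Pq_0_right[simp]: "Pq q a 0 = 1" by (cases a) auto

definition PX where "PX q a b \<longleftrightarrow> qint q (a + 1) * Pq q (a + 1) b = qint q (a + b + 1) * Pq q a b"
definition PY where "PY q a b \<longleftrightarrow> qint q (b + 1) * Pq q a (b + 1) = qint q (a + b + 1) * Pq q a b"

lemma PX_step: "PX q a b \<Longrightarrow> PY q a b \<Longrightarrow> PX q a (Suc b)"
proof -
  assume X: "PX q a b" and Y: "PY q a b"
  have "qint q (a+1) * Pq q (a+1) (Suc b) = qint q (a+1) * Pq q a (Suc b) + q^(a+1) * (qint q (a+1) * Pq q (a+1) b)"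
    by (simp add: algebra_simps)
  also have "\<dots> = qint q (a+1) * Pq q a (Suc b) + q^(a+1) * (qint q (b+1) * Pq q a (b+1))"
    using X Y by (simp add: PX_def PY_def)
  also have "\<dots> = (qint q (a+1) + q^(a+1) * qint q (b+1)) * Pq q a (Suc b)" by (simp add: algebra_simps)
  also have "qint q (a+1) + q^(a+1) * qint q (b+1) = qint q (a + Suc b + 1)"
    using qint_add[of q "a+1" "b+1"] by simp
  finally show ?thesis by (simp add: PX_def)
qed

lemma PY_step: "PX q a b \<Longrightarrow> PY q a b \<Longrightarrow> PY q (Suc a) b"
proof -
  assume X: "PX q a b" and Y: "PY q a b"
  have "qint q (b+1) * Pq q (Suc a) (b+1) = qint q (b+1) * Pq q a (b+1) + q^(a+1) * (qint q (b+1) * Pq q (a+1) b)"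
    by (simp add: algebra_simps)
  also have "\<dots> = qint q (a+1) * Pq q (a+1) b + q^(a+1) * (qint q (b+1) * Pq q (a+1) b)"
    using X Y by (simp add: PX_def PY_def)
  also have "\<dots> = (qint q (a+1) + q^(a+1) * qint q (b+1)) * Pq q (Suc a) b" by (simp add: algebra_simps)
  also have "qint q (a+1) + q^(a+1) * qint q (b+1) = qint q (Suc a + b + 1)"
    using qint_add[of q "a+1" "b+1"] by simp
  finally show ?thesis by (simp add: PY_def)
qed

lemma PXY: "PX q a b \<and> PY q a b"
proof (induction b arbitrary: a)
  case 0
  have X: "PX q a 0" for a by (simp add: PX_def)
  have "PY q a 0" for a
  proof (induction a)
    case 0 show ?case by (simp add: PY_def)
  next
    case (Suc a) show ?case using PY_step[OF X Suc.IH] .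
  qed
  thus ?case using X by simp
next
  case (Suc b)
  have X: "PX q a (Suc b)" for a using Suc PX_step by blast
  have "PY q a (Suc b)" for a
  proof (induction a)
    case 0 show ?case by (simp add: PY_def)
  next
    case (Suc a) show ?case using PY_step[OF X Suc.IH] .
  qed
  thus ?case using X by simp
qed

lemma Pq_X: "qint q (a + 1) * Pq q (a + 1) b = qint q (a + b + 1) * Pq q a b"
  using PXY[of q a b] by (simp add: PX_def)

lemma Pq_Y: "qint q (b + 1) * Pq q a (b + 1) = qint q (a + b + 1) * Pq q a b"
  using PXY[of q a b] by (simp add: PY_def)

lemma Pq_1: "Pq q 1 b = qint q (b + 1)"
  using Pq_X[of q 0 b] by simp


lemma sum_pow_card:
  fixes c :: "'a::field"
  assumes "finite A"
  shows "(\<Sum>S\<in>Pow A. c ^ card S) = (1 + c) ^ card A"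
  using assms
proof (induction A rule: finite_induct)
  case empty thus ?case by simp
next
  case (insert b A)
  have inj: "inj_on (insert b) (Pow A)" using insert.hyps
    by (intro inj_onI) (metis PowD insert_ident subsetD)
  have disj: "Pow A \<inter> insert b ` Pow A = {}" using insert.hyps by auto
  have fin: "finite (Pow A)" "finite (insert b ` Pow A)" using insert.hyps by auto
  have "(\<Sum>S\<in>Pow (insert b A). c ^ card S) = (\<Sum>S\<in>Pow A. c ^ card S) + (\<Sum>S\<in>insert b ` Pow A. c ^ card S)"
    unfolding Pow_insert by (rule sum.union_disjoint[OF fin disj])
  also have "(\<Sum>S\<in>insert b ` Pow A. c ^ card S) = (\<Sum>S\<in>Pow A. c ^ card (insert b S))"
    by (rule sum.reindex[OF inj, unfolded o_def])
  also have "\<dots> = (\<Sum>S\<in>Pow A. c * c ^ card S)"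
  proof (rule sum.cong[OF refl])
    fix S assume "S \<in> Pow A"
    hence "b \<notin> S" "finite S" using insert.hyps finite_subset by auto
    thus "c ^ card (insert b S) = c * c ^ card S" by simp
  qed
  finally show ?case using insert by (simp add: sum_distrib_left[symmetric] algebra_simps)
qed

definition hs :: "'a::field \<Rightarrow> 'a \<Rightarrow> nat set \<Rightarrow> 'a" where
  "hs q x U = (\<Sum>S\<in>{S. S \<subseteq> U \<and> S \<noteq> {}}. q ^ (card S - 1) * x ^ card {r\<in>U. r \<in> S \<or> (\<forall>s\<in>S. \<not> s < r)})"

lemma hs_rec:
  assumes fin: "finite A" and lt: "\<forall>a\<in>A. b < a"
  shows "hs q x (insert b A) = x * (1 + q * x) ^ card A + x * hs q x A"
proof -
  have bA: "b \<notin> A" using lt by auto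
  let ?f = "\<lambda>S. q ^ (card S - 1) * x ^ card {r\<in>insert b A. r \<in> S \<or> (\<forall>s\<in>S. \<not> s < r)}"
  have split: "{S. S \<subseteq> insert b A \<and> S \<noteq> {}} = insert b ` Pow A \<union> {S. S \<subseteq> A \<and> S \<noteq> {}}"
  proof (rule set_eqI, rule iffI)
    fix S assume S: "S \<in> {S. S \<subseteq> insert b A \<and> S \<noteq> {}}"
    show "S \<in> insert b ` Pow A \<union> {S. S \<subseteq> A \<and> S \<noteq> {}}"
    proof (cases "b \<in> S")
      case True
      hence "S = insert b (S - {b})" by auto
      moreover have "S - {b} \<in> Pow A" using S by auto
      ultimately show ?thesis by blast
    next
      case False thus ?thesis using S by auto
    qed
  qed auto
  have disj: "insert b ` Pow A \<inter> {S. S \<subseteq> A \<and> S \<noteq> {}} = {}" using bA by auto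
  have fin2: "finite (insert b ` Pow A)" "finite {S. S \<subseteq> A \<and> S \<noteq> {}}" using fin by auto
  have inj: "inj_on (insert b) (Pow A)" using bA
    by (intro inj_onI) (metis PowD insert_ident subsetD)
  have "hs q x (insert b A) = sum ?f (insert b ` Pow A) + sum ?f {S. S \<subseteq> A \<and> S \<noteq> {}}"
    unfolding hs_def split by (rule sum.union_disjoint[OF fin2 disj])
  also have "sum ?f (insert b ` Pow A) = (\<Sum>S\<in>Pow A. x * (q * x) ^ card S)"
  proof -
    have "sum ?f (insert b ` Pow A) = sum (?f \<circ> insert b) (Pow A)" by (rule sum.reindex[OF inj])
    also have "\<dots> = (\<Sum>S\<in>Pow A. x * (q * x) ^ card S)"
    proof (rule sum.cong[OF refl])
      fix S assume S: "S \<in> Pow A"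
      hence fS: "finite S" "b \<notin> S" using fin bA finite_subset by auto
      have "{r\<in>insert b A. r \<in> insert b S \<or> (\<forall>s\<in>insert b S. \<not> s < r)} = insert b S"
        using S lt by auto
      thus "(?f \<circ> insert b) S = x * (q * x) ^ card S" using fS by (simp add: power_mult_distrib)
    qed
    finally show ?thesis .
  qed
  also have "\<dots> = x * (1 + q * x) ^ card A" using sum_pow_card[OF fin, of "q * x"] by (simp add: sum_distrib_left[symmetric])
  also have "sum ?f {S. S \<subseteq> A \<and> S \<noteq> {}} = x * hs q x A"
    unfolding hs_def sum_distrib_left
  proof (rule sum.cong[OF refl])
    fix S assume S: "S \<in> {S. S \<subseteq> A \<and> S \<noteq> {}}"
    have bs: "\<forall>s\<in>S. b < s" using S lt by auto
    have "{r\<in>insert b A. r \<in> S \<or> (\<forall>s\<in>S. \<not> s < r)} = insert b {r\<in>A. r \<in> S \<or> (\<forall>s\<in>S. \<not> s < r)}"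
      using S bs by auto
    moreover have "finite {r\<in>A. r \<in> S \<or> (\<forall>s\<in>S. \<not> s < r)}" using fin by simp
    ultimately show "?f S = x * (q ^ (card S - 1) * x ^ card {r\<in>A. r \<in> S \<or> (\<forall>s\<in>S. \<not> s < r)})"
      using bA by simp
  qed
  finally show ?thesis .
qed

lemma hs_closed:
  fixes q x :: "'a::field"
  assumes "finite U"
  shows "(1 + q * x - x) * hs q x U = x * ((1 + q * x) ^ card U - x ^ card U)"
  using assms
proof (induction U rule: finite_linorder_min_induct)
  case empty thus ?case by (simp add: hs_def)
next
  case (insert b A)
  have bA: "b \<notin> A" using insert by auto
  have e: "hs q x (insert b A) = x * (1 + q * x) ^ card A + x * hs q x A" by (rule hs_rec[OF insert(1,2)])
  have "(1 + q * x - x) * hs q x (insert b A) = (1 + q * x - x) * (x * (1 + q * x) ^ card A) + x * ((1 + q * x - x) * hs q x A)"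
    unfolding e by (simp add: algebra_simps)
  also have "\<dots> = (1 + q * x - x) * (x * (1 + q * x) ^ card A) + x * (x * ((1 + q * x) ^ card A - x ^ card A))"
    using insert.IH by simp
  also have "\<dots> = x * ((1 + q * x) * (1 + q * x) ^ card A - x * x ^ card A)"
    by (simp add: algebra_simps)
  also have "\<dots> = x * ((1 + q * x) ^ card (insert b A) - x ^ card (insert b A))"
    using bA insert(1) by simp
  finally show ?case .
qed

section \<open>Tableaux\<close>

definition shp :: "nat list \<Rightarrow> (nat \<times> nat) set" where
  "shp L = {(c, r). c < length L \<and> r < L ! c}"

definition ptab :: "nat list \<Rightarrow> (nat \<times> nat) set \<Rightarrow> bool" where
  "ptab L T \<longleftrightarrow> T \<subseteq> shp L \<and> (\<forall>c < length L. \<exists>r. (c, r) \<in> T) \<and>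
     (\<forall>c r. (c, r) \<in> shp L \<and> (c, r) \<notin> T \<longrightarrow> \<not> ((\<exists>r' < r. (c, r') \<in> T) \<and> (\<exists>c' < c. (c', r) \<in> T)))"

lemma perm_tableau_ptab: "perm_tableau I T = ptab (col_lengths I) T"
  by (simp add: perm_tableau_def ptab_def shape_def shp_def)

definition unres :: "nat \<Rightarrow> nat list \<Rightarrow> (nat \<times> nat) set \<Rightarrow> nat set" where
  "unres k L T = {r. r < k \<and> \<not> (\<exists>c. (c, r) \<in> shp L \<and> (c, r) \<notin> T \<and> (\<exists>r' < r. (c, r') \<in> T))}"

definition Gv :: "'a::field \<Rightarrow> nat list \<Rightarrow> nat \<Rightarrow> 'a \<Rightarrow> 'a" where
  "Gv q L k x = (\<Sum>T\<in>{T. ptab L T}. q ^ (card T - length L) * x ^ card (unres k L T))"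

lemma finite_shp[simp]: "finite (shp L)"
  unfolding shp_def by (rule finite_subset[of _ "{..<length L} \<times> {..<Max (insert 0 (set L))}"])
    (auto, metis Max_ge finite_insert finite_set insertCI leD linorder_le_less_linear nth_mem order.strict_trans1)

lemma finite_ptabs[simp]: "finite {T. ptab L T}"
  by (rule finite_subset[of _ "Pow (shp L)"]) (auto simp: ptab_def)

lemma ptab_finite: "ptab L T \<Longrightarrow> finite T"
  by (auto simp: ptab_def intro: finite_subset)

lemma ptab_card: "ptab L T \<Longrightarrow> length L \<le> card T"
proof -
  assume p: "ptab L T"
  have "{..<length L} \<subseteq> fst ` T" using p unfolding ptab_def by force
  hence "card {..<length L} \<le> card (fst ` T)" using ptab_finite[OF p] by (intro card_mono) auto
  also have "\<dots> \<le> card T" using ptab_finite[OF p] by (rule card_image_le)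
  finally show ?thesis by simp
qed

lemma finite_unres[simp]: "finite (unres k L T)"
  by (rule finite_subset[of _ "{..<k}"]) (auto simp: unres_def)

lemma unres_Suc:
  assumes "\<forall>l\<in>set L. l \<le> k"
  shows "unres (Suc k) L T = insert k (unres k L T)"
proof -
  have "\<And>c. (c, k) \<notin> shp L" using assms by (auto simp: shp_def dest!: nth_mem)
  thus ?thesis by (auto simp: unres_def less_Suc_eq)
qed

lemma Gv_Suc:
  assumes "\<forall>l\<in>set L. l \<le> k"
  shows "Gv q L (Suc k) x = x * Gv q L k x"
  unfolding Gv_def sum_distrib_left
proof (rule sum.cong[OF refl])
  fix T
  have "k \<notin> unres k L T" by (simp add: unres_def)
  thus "q ^ (card T - length L) * x ^ card (unres (Suc k) L T) = x * (q ^ (card T - length L) * x ^ card (unres k L T))"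
    using unres_Suc[OF assms] by simp
qed

lemma Gv_Nil: "Gv q [] (Suc 0) x = x"
proof -
  have "{T. ptab [] T} = {{}}" by (auto simp: ptab_def shp_def)
  moreover have "unres 1 [] {} = {0}" by (auto simp: unres_def shp_def)
  ultimately show ?thesis by (simp add: Gv_def)
qed

section \<open>Adding a first column\<close>

definition addcol :: "(nat \<times> nat) set \<Rightarrow> nat set \<Rightarrow> (nat \<times> nat) set" where
  "addcol T S = Pair 0 ` S \<union> (\<lambda>(c, r). (Suc c, r)) ` T"

definition colS :: "(nat \<times> nat) set \<Rightarrow> nat set" where
  "colS T' = {r. (0, r) \<in> T'}"

definition restT :: "(nat \<times> nat) set \<Rightarrow> (nat \<times> nat) set" where
  "restT T' = {(c, r). (Suc c, r) \<in> T'}"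

lemma addcol_mem0[simp]: "(0, r) \<in> addcol T S \<longleftrightarrow> r \<in> S"
  by (auto simp: addcol_def)

lemma addcol_memS[simp]: "(Suc c, r) \<in> addcol T S \<longleftrightarrow> (c, r) \<in> T"
  by (auto simp: addcol_def)

lemma colS_addcol[simp]: "colS (addcol T S) = S" by (simp add: colS_def)
lemma restT_addcol[simp]: "restT (addcol T S) = T" by (simp add: restT_def)

lemma addcol_split: "addcol (restT T') (colS T') = T'"
proof (rule set_eqI)
  fix p :: "nat \<times> nat"
  obtain c r where p: "p = (c, r)" by (cases p)
  show "p \<in> addcol (restT T') (colS T') \<longleftrightarrow> p \<in> T'"
    unfolding p by (cases c) (auto simp: colS_def restT_def)
qed

lemma shp_Cons0[simp]: "(0, r) \<in> shp (k # L) \<longleftrightarrow> r < k"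
  by (simp add: shp_def)
lemma shp_ConsS[simp]: "(Suc c, r) \<in> shp (k # L) \<longleftrightarrow> (c, r) \<in> shp L"
  by (simp add: shp_def)

lemma card_addcol: "finite T \<Longrightarrow> finite S \<Longrightarrow> card (addcol T S) = card S + card T"
proof -
  assume f: "finite T" "finite S"
  have "card (addcol T S) = card (Pair (0::nat) ` S) + card ((\<lambda>(c, r). (Suc c, r)) ` T)"
    unfolding addcol_def by (rule card_Un_disjoint) (use f in auto)
  moreover have "card (Pair (0::nat) ` S) = card S" by (rule card_image) (auto intro: inj_onI)
  moreover have "card ((\<lambda>(c, r). (Suc c, r)) ` T) = card T" by (rule card_image) (auto intro: inj_onI)
  ultimately show ?thesis by simp
qed

lemma ptab_addcol:
  "ptab (k # L) (addcol T S) \<longleftrightarrow> ptab L T \<and> S \<subseteq> unres k L T \<and> S \<noteq> {}"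
proof -
  let ?T' = "addcol T S"
  have A: "?T' \<subseteq> shp (k # L) \<longleftrightarrow> S \<subseteq> {..<k} \<and> T \<subseteq> shp L"
  proof
    assume h: "?T' \<subseteq> shp (k # L)"
    have "S \<subseteq> {..<k}"
    proof
      fix r assume "r \<in> S" hence "(0, r) \<in> ?T'" by simp
      hence "(0, r) \<in> shp (k # L)" using h by blast
      thus "r \<in> {..<k}" by simp
    qed
    moreover have "T \<subseteq> shp L"
    proof
      fix p assume "p \<in> T"
      then obtain c r where p: "p = (c, r)" "(c, r) \<in> T" by (cases p) auto
      hence "(Suc c, r) \<in> ?T'" by simp
      hence "(Suc c, r) \<in> shp (k # L)" using h by blast
      thus "p \<in> shp L" using p by simp
    qed
    ultimately show "S \<subseteq> {..<k} \<and> T \<subseteq> shp L" by simp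
  next
    assume h: "S \<subseteq> {..<k} \<and> T \<subseteq> shp L"
    show "?T' \<subseteq> shp (k # L)"
    proof
      fix p assume "p \<in> ?T'"
      then obtain c r where p: "p = (c, r)" by (cases p)
      show "p \<in> shp (k # L)" using h \<open>p \<in> ?T'\<close> unfolding p by (cases c) auto
    qed
  qed
  have B: "(\<forall>c < length (k # L). \<exists>r. (c, r) \<in> ?T') \<longleftrightarrow> S \<noteq> {} \<and> (\<forall>c < length L. \<exists>r. (c, r) \<in> T)"
  proof
    assume h: "\<forall>c < length (k # L). \<exists>r. (c, r) \<in> ?T'"
    have "S \<noteq> {}" using h[rule_format, of 0] by auto
    moreover have "\<forall>c < length L. \<exists>r. (c, r) \<in> T" using h by (metis addcol_memS length_Cons Suc_mono)
    ultimately show "S \<noteq> {} \<and> (\<forall>c < length L. \<exists>r. (c, r) \<in> T)" by simp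
  next
    assume h: "S \<noteq> {} \<and> (\<forall>c < length L. \<exists>r. (c, r) \<in> T)"
    show "\<forall>c < length (k # L). \<exists>r. (c, r) \<in> ?T'"
    proof (intro allI impI)
      fix c assume c: "c < length (k # L)"
      show "\<exists>r. (c, r) \<in> ?T'"
      proof (cases c)
        case 0 thus ?thesis using h by auto
      next
        case (Suc c0) thus ?thesis using h c by auto
      qed
    qed
  qed
  let ?C' = "\<forall>c r. (c, r) \<in> shp (k # L) \<and> (c, r) \<notin> ?T' \<longrightarrow> \<not> ((\<exists>r' < r. (c, r') \<in> ?T') \<and> (\<exists>c' < c. (c', r) \<in> ?T'))"
  let ?C = "\<forall>c r. (c, r) \<in> shp L \<and> (c, r) \<notin> T \<longrightarrow> \<not> ((\<exists>r' < r. (c, r') \<in> T) \<and> (\<exists>c' < c. (c', r) \<in> T))"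
  let ?U = "\<forall>r\<in>S. \<not> (\<exists>c. (c, r) \<in> shp L \<and> (c, r) \<notin> T \<and> (\<exists>r' < r. (c, r') \<in> T))"
  have lt: "(\<exists>c' < Suc c. (c', r) \<in> ?T') \<longleftrightarrow> r \<in> S \<or> (\<exists>c' < c. (c', r) \<in> T)" for c r
  proof
    assume "\<exists>c' < Suc c. (c', r) \<in> ?T'"
    then obtain c' where "c' < Suc c" "(c', r) \<in> ?T'" by blast
    thus "r \<in> S \<or> (\<exists>c' < c. (c', r) \<in> T)" by (cases c') auto
  next
    assume "r \<in> S \<or> (\<exists>c' < c. (c', r) \<in> T)"
    thus "\<exists>c' < Suc c. (c', r) \<in> ?T'"
    proof
      assume "r \<in> S" thus ?thesis by (intro exI[of _ 0]) auto
    next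
      assume "\<exists>c' < c. (c', r) \<in> T"
      then obtain c' where "c' < c" "(c', r) \<in> T" by blast
      thus ?thesis by (intro exI[of _ "Suc c'"]) auto
    qed
  qed
  have C: "?C' \<longleftrightarrow> ?C \<and> ?U"
  proof
    assume h: ?C'
    have "?C"
    proof (intro allI impI)
      fix c r assume a: "(c, r) \<in> shp L \<and> (c, r) \<notin> T"
      have "(Suc c, r) \<in> shp (k # L) \<and> (Suc c, r) \<notin> ?T'" using a by simp
      from h[rule_format, OF this]
      have "\<not> ((\<exists>r' < r. (Suc c, r') \<in> ?T') \<and> (\<exists>c' < Suc c. (c', r) \<in> ?T'))" .
      thus "\<not> ((\<exists>r' < r. (c, r') \<in> T) \<and> (\<exists>c' < c. (c', r) \<in> T))" unfolding lt by auto
    qed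
    moreover have "?U"
    proof (intro ballI notI)
      fix r assume r: "r \<in> S" and e: "\<exists>c. (c, r) \<in> shp L \<and> (c, r) \<notin> T \<and> (\<exists>r' < r. (c, r') \<in> T)"
      then obtain c where c: "(c, r) \<in> shp L" "(c, r) \<notin> T" "\<exists>r' < r. (c, r') \<in> T" by blast
      have "(Suc c, r) \<in> shp (k # L) \<and> (Suc c, r) \<notin> ?T'" using c by simp
      from h[rule_format, OF this]
      have "\<not> ((\<exists>r' < r. (Suc c, r') \<in> ?T') \<and> (\<exists>c' < Suc c. (c', r) \<in> ?T'))" .
      thus False unfolding lt using r c by auto
    qed
    ultimately show "?C \<and> ?U" by simp
  next
    assume h: "?C \<and> ?U"
    show ?C'
    proof (intro allI impI)
      fix c r assume a: "(c, r) \<in> shp (k # L) \<and> (c, r) \<notin> ?T'"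
      show "\<not> ((\<exists>r' < r. (c, r') \<in> ?T') \<and> (\<exists>c' < c. (c', r) \<in> ?T'))"
      proof (cases c)
        case 0 thus ?thesis by simp
      next
        case (Suc c0)
        have a': "(c0, r) \<in> shp L" "(c0, r) \<notin> T" using a Suc by auto
        show ?thesis unfolding Suc lt addcol_memS
        proof
          assume "(\<exists>r'<r. (c0, r') \<in> T) \<and> (r \<in> S \<or> (\<exists>c'<c0. (c', r) \<in> T))"
          then obtain r' where r': "r' < r" "(c0, r') \<in> T" and o: "r \<in> S \<or> (\<exists>c'<c0. (c', r) \<in> T)" by blast
          from o show False
          proof
            assume "r \<in> S"
            with h have "\<not> (\<exists>c. (c, r) \<in> shp L \<and> (c, r) \<notin> T \<and> (\<exists>r' < r. (c, r') \<in> T))" by blast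
            thus False using a' r' by blast
          next
            assume "\<exists>c'<c0. (c', r) \<in> T"
            moreover have "\<not> ((\<exists>r' < r. (c0, r') \<in> T) \<and> (\<exists>c' < c0. (c', r) \<in> T))"
              using h a' by blast
            ultimately show False using r' by blast
          qed
        qed
      qed
    qed
  qed
  have U: "S \<subseteq> unres k L T \<longleftrightarrow> S \<subseteq> {..<k} \<and> ?U" unfolding unres_def by blast
  show ?thesis unfolding ptab_def A B C U by (rule iffI; elim conjE; intro conjI; assumption)
qed

lemma unres_addcol:
  "unres k (k # L) (addcol T S) = {r \<in> unres k L T. r \<in> S \<or> (\<forall>s\<in>S. \<not> s < r)}"
proof (rule set_eqI)
  fix r
  have "(\<exists>c. (c, r) \<in> shp (k # L) \<and> (c, r) \<notin> addcol T S \<and> (\<exists>r' < r. (c, r') \<in> addcol T S)) \<longleftrightarrow>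
        (r < k \<and> r \<notin> S \<and> (\<exists>s\<in>S. s < r)) \<or> (\<exists>c. (c, r) \<in> shp L \<and> (c, r) \<notin> T \<and> (\<exists>r' < r. (c, r') \<in> T))"
  proof
    assume "\<exists>c. (c, r) \<in> shp (k # L) \<and> (c, r) \<notin> addcol T S \<and> (\<exists>r' < r. (c, r') \<in> addcol T S)"
    then obtain c where c: "(c, r) \<in> shp (k # L)" "(c, r) \<notin> addcol T S" "\<exists>r' < r. (c, r') \<in> addcol T S" by blast
    thus "(r < k \<and> r \<notin> S \<and> (\<exists>s\<in>S. s < r)) \<or> (\<exists>c. (c, r) \<in> shp L \<and> (c, r) \<notin> T \<and> (\<exists>r' < r. (c, r') \<in> T))"
      by (cases c) auto
  next
    assume "(r < k \<and> r \<notin> S \<and> (\<exists>s\<in>S. s < r)) \<or> (\<exists>c. (c, r) \<in> shp L \<and> (c, r) \<notin> T \<and> (\<exists>r' < r. (c, r') \<in> T))"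
    thus "\<exists>c. (c, r) \<in> shp (k # L) \<and> (c, r) \<notin> addcol T S \<and> (\<exists>r' < r. (c, r') \<in> addcol T S)"
    proof
      assume "r < k \<and> r \<notin> S \<and> (\<exists>s\<in>S. s < r)"
      thus ?thesis by (intro exI[of _ 0]) auto
    next
      assume "\<exists>c. (c, r) \<in> shp L \<and> (c, r) \<notin> T \<and> (\<exists>r' < r. (c, r') \<in> T)"
      then obtain c where "(c, r) \<in> shp L \<and> (c, r) \<notin> T \<and> (\<exists>r' < r. (c, r') \<in> T)" by blast
      thus ?thesis by (intro exI[of _ "Suc c"]) auto
    qed
  qed
  thus "r \<in> unres k (k # L) (addcol T S) \<longleftrightarrow> r \<in> {r \<in> unres k L T. r \<in> S \<or> (\<forall>s\<in>S. \<not> s < r)}"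
    unfolding unres_def by auto
qed

lemma Gv_Cons:
  fixes q x :: "'a::field"
  shows "(1 + q * x - x) * Gv q (k # L) k x = x * (Gv q L k (1 + q * x) - Gv q L k x)"
proof -
  let ?A = "{T'. ptab (k # L) T'}"
  let ?B = "SIGMA T:{T. ptab L T}. {S. S \<subseteq> unres k L T \<and> S \<noteq> {}}"
  let ?f = "\<lambda>T'. q ^ (card T' - length (k # L)) * x ^ card (unres k (k # L) T')"
  let ?g = "\<lambda>(T, S). q ^ (card T - length L) * (q ^ (card S - 1) * x ^ card {r \<in> unres k L T. r \<in> S \<or> (\<forall>s\<in>S. \<not> s < r)})"
  have "Gv q (k # L) k x = sum ?f ?A" by (simp add: Gv_def)
  also have "\<dots> = sum ?g ?B"
  proof (rule sum.reindex_bij_witness[where i = "\<lambda>(T, S). addcol T S" and j = "\<lambda>T'. (restT T', colS T')"])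
    fix T' assume "T' \<in> ?A"
    thus "(case (restT T', colS T') of (T, S) \<Rightarrow> addcol T S) = T'" by (simp add: addcol_split)
  next
    fix T' assume "T' \<in> ?A"
    hence "ptab (k # L) (addcol (restT T') (colS T'))" by (simp add: addcol_split)
    thus "(restT T', colS T') \<in> ?B" unfolding ptab_addcol by simp
  next
    fix p assume "p \<in> ?B"
    thus "(restT (case p of (T, S) \<Rightarrow> addcol T S), colS (case p of (T, S) \<Rightarrow> addcol T S)) = p"
      by (cases p) simp
  next
    fix p assume "p \<in> ?B"
    thus "(case p of (T, S) \<Rightarrow> addcol T S) \<in> ?A" by (cases p) (simp add: ptab_addcol)
  next
    fix T' assume T': "T' \<in> ?A"
    define T S where "T = restT T'" "S = colS T'"
    have e: "T' = addcol T S" by (simp add: T_S_def addcol_split)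
    have p: "ptab L T" "S \<subseteq> unres k L T" "S \<noteq> {}" using T' unfolding e by (auto simp: ptab_addcol)
    have fS: "finite S" using p(2) finite_unres finite_subset by blast
    have cS: "1 \<le> card S" using fS p(3) by (simp add: Suc_le_eq card_gt_0_iff)
    have cT: "length L \<le> card T" using ptab_card[OF p(1)] .
    have "card T' - length (k # L) = (card S - 1) + (card T - length L)"
      unfolding e using card_addcol[OF ptab_finite[OF p(1)] fS] cS cT by simp
    thus "?g (restT T', colS T') = ?f T'"
      unfolding T_S_def[symmetric] unfolding e unres_addcol by (simp add: power_add)
  qed
  also have "\<dots> = (\<Sum>T\<in>{T. ptab L T}. q ^ (card T - length L) * hs q x (unres k L T))"
    unfolding hs_def
    by (subst sum.Sigma[symmetric]) (auto simp: sum_distrib_left intro!: sum.cong)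
  finally have "(1 + q * x - x) * Gv q (k # L) k x =
      (\<Sum>T\<in>{T. ptab L T}. q ^ (card T - length L) * ((1 + q * x - x) * hs q x (unres k L T)))"
    by (simp add: sum_distrib_left algebra_simps)
  also have "\<dots> = (\<Sum>T\<in>{T. ptab L T}. q ^ (card T - length L) * (x * ((1 + q * x) ^ card (unres k L T) - x ^ card (unres k L T))))"
    by (simp add: hs_closed)
  also have "\<dots> = x * (Gv q L k (1 + q * x) - Gv q L k x)"
    unfolding Gv_def by (simp add: sum_distrib_left sum_subtractf algebra_simps)
  finally show ?thesis .
qed

lemma upt_0_Suc: "[0..<Suc n] = 0 # map Suc [0..<n]"
  by (subst upt_conv_Cons) (simp_all add: map_Suc_upt)

lemma col_lengths_1Cons: "col_lengths (1 # J) = col_lengths J"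
proof -
  have "[0..<length (1 # J)] = 0 # map Suc [0..<length J]" by (simp only: length_Cons upt_0_Suc)
  thus ?thesis unfolding col_lengths_def by (simp add: o_def)
qed

lemma col_lengths_incf:
  assumes "is_comp J" "J \<noteq> []"
  shows "col_lengths (incf J) = length J # col_lengths J"
proof -
  obtain a r where J: "J = a # r" using assms by (cases J) auto
  have a: "0 < a" using assms J by simp
  have u: "[0..<length (a # r)] = 0 # map Suc [0..<length r]" by (simp only: length_Cons upt_0_Suc)
  have "replicate a (Suc (length r)) = Suc (length r) # replicate (a - 1) (Suc (length r))"
    using a by (cases a) auto
  thus ?thesis unfolding J col_lengths_def incf.simps length_Cons upt_0_Suc by (simp add: o_def del: upt_Suc)
qed

lemma col_lengths_le: "\<forall>l\<in>set (col_lengths J). l \<le> length J"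
  unfolding col_lengths_def by auto

definition G :: "'a::field \<Rightarrow> nat list \<Rightarrow> nat \<Rightarrow> 'a" where
  "G q I b = Gv q (col_lengths I) (length I) (qint q (b + 1))"

lemma G_1Cons: "G q (1 # J) b = qint q (b + 1) * G q J b"
  unfolding G_def col_lengths_1Cons length_Cons by (rule Gv_Suc[OF col_lengths_le])

lemma G_incf:
  assumes "is_comp J" "J \<noteq> []"
  shows "q ^ (b + 1) * G q (incf J) b = qint q (b + 1) * (G q J (b + 1) - G q J b)"
proof -
  have e1: "1 + q * qint q (b + 1) = qint q (b + 2)" using qint_Suc'[of q "b+1"] by simp
  have e2: "qint q (b + 2) - qint q (b + 1) = q ^ (b + 1)" using qint_Suc[of q "b+1"] by simp
  have "(1 + q * qint q (b + 1) - qint q (b + 1)) * Gv q (length J # col_lengths J) (length J) (qint q (b + 1)) =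
    qint q (b + 1) * (Gv q (col_lengths J) (length J) (1 + q * qint q (b + 1)) - Gv q (col_lengths J) (length J) (qint q (b + 1)))"
    by (rule Gv_Cons)
  hence "q ^ (b + 1) * Gv q (length J # col_lengths J) (length J) (qint q (b + 1)) =
    qint q (b + 1) * (Gv q (col_lengths J) (length J) (qint q (b + 2)) - Gv q (col_lengths J) (length J) (qint q (b + 1)))"
    unfolding e1 e2 .
  thus ?thesis unfolding G_def col_lengths_incf[OF assms] length_incf by (simp add: add.commute)
qed

lemma G_single: "G q [1] b = qint q (b + 1)"
  by (simp add: G_def col_lengths_def Gv_Nil)

lemma PTA_G: "PTA q I = G q I 0"
  by (simp add: PTA_def G_def Gv_def perm_tableau_ptab tab_rank_def)


lemma comps_Suc0: "comps (Suc 0) = {[Suc 0]}" using comps_1 by simp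

lemma comps_is_comp: "J \<in> comps n \<Longrightarrow> is_comp J" by (simp add: comps_def)
lemma comps_sum: "J \<in> comps n \<Longrightarrow> sum_list J = n" by (simp add: comps_def)

lemma st_1_1:
  assumes "is_comp K" "is_comp J" "K \<noteq> []" "J \<noteq> []"
  shows "st (1 # K) (1 # J) = st K J + length K"
  unfolding st_stS des_set_1Cons[OF assms(3)] des_set_1Cons[OF assms(4)]
  using stS_1_1[OF finite_des_set finite_des_set zero_notin_des[OF assms(1)] zero_notin_des[OF assms(2)]]
    card_des_set[OF assms(1,3)] by simp

lemma st_1_inc:
  assumes "is_comp K" "is_comp J" "K \<noteq> []" "J \<noteq> []"
  shows "st (1 # K) (incf J) = st K J"
  unfolding st_stS des_set_1Cons[OF assms(3)] des_set_incf[OF assms(4)]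
  using stS_1_Suc[OF zero_notin_des[OF assms(2)]] by simp

lemma st_inc_inc:
  assumes "K \<noteq> []" "J \<noteq> []"
  shows "st (incf K) (incf J) = st K J"
  unfolding st_stS des_set_incf[OF assms(1)] des_set_incf[OF assms(2)] stS_Suc ..

lemma st'_1_1:
  assumes "is_comp K" "is_comp J" "K \<noteq> []" "J \<noteq> []"
  shows "st' (1 # K) (1 # J) = st' K J + length J"
  unfolding st'_stS' des_set_1Cons[OF assms(3)] des_set_1Cons[OF assms(4)]
  using stS'_1_1[OF finite_des_set finite_des_set zero_notin_des[OF assms(1)] zero_notin_des[OF assms(2)]]
    card_des_set[OF assms(2,4)] by simp

lemma st'_1_inc:
  assumes "is_comp K" "is_comp J" "K \<noteq> []" "J \<noteq> []"
  shows "st' (1 # K) (incf J) + 1 = st' K J + length J"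
  unfolding st'_stS' des_set_1Cons[OF assms(3)] des_set_incf[OF assms(4)]
  using stS'_1_Suc[OF finite_des_set finite_des_set zero_notin_des[OF assms(1)] zero_notin_des[OF assms(2)]]
    card_des_set[OF assms(2,4)] by simp

lemma st'_inc_inc:
  assumes "K \<noteq> []" "J \<noteq> []"
  shows "st' (incf K) (incf J) = st' K J"
  unfolding st'_stS' des_set_incf[OF assms(1)] des_set_incf[OF assms(2)] stS'_Suc ..

lemma finer_length:
  assumes "is_comp K" "is_comp J" "K \<noteq> []" "J \<noteq> []" "finer K J"
  shows "length J \<le> length K"
proof -
  have "card (des_set J) \<le> card (des_set K)" using assms(5) by (simp add: finer_def card_mono)
  thus ?thesis using card_des_set[OF assms(1,3)] card_des_set[OF assms(2,4)] by simp
qed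

context
  fixes n :: nat and K J :: "nat list"
  assumes n: "0 < n" and K: "K \<in> comps n" and J: "J \<in> comps n"
begin

private lemma facts: "is_comp K" "is_comp J" "K \<noteq> []" "J \<noteq> []" "sum_list K = n" "sum_list J = n"
  using K J n comps_nonempty by (auto simp: comps_def)

lemma Lcoef_1_1: "Lcoef q (1 # J) (1 # K) = q ^ length K * Lcoef q J K"
  using facts st_1_1[of K J] finer_1_1[of K J] by (simp add: Lcoef_def power_add)

lemma Lcoef_inc_1: "Lcoef q (incf J) (1 # K) = Lcoef q J K"
  using facts st_1_inc[of K J] finer_1_inc[of K J] by (simp add: Lcoef_def sum_incf)

lemma Lcoef_1_inc: "Lcoef q (1 # J) (incf K) = 0"
  using facts finer_inc_1[of K J] by (simp add: Lcoef_def)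

lemma Lcoef_inc_inc: "Lcoef q (incf J) (incf K) = Lcoef q J K"
  using facts st_inc_inc[of K J] finer_inc_inc[of K J] is_comp_incf
  by (simp add: Lcoef_def sum_incf)

end

lemma comps_SucE:
  assumes "K \<in> comps (Suc n)" "0 < n"
  obtains K0 where "K0 \<in> comps n" "K = 1 # K0" | K0 where "K0 \<in> comps n" "K = incf K0"
  using assms comps_Suc by blast

lemma Fsum:
  fixes q :: "'a::field"
  assumes q: "q \<noteq> 0" and n: "0 < n" and K: "K \<in> comps n"
  shows "(\<Sum>J\<in>comps n. Lcoef q J K * G q J b) = QFactA q K * Pq q (length K) b"
  using n K
proof (induction n arbitrary: K b rule: nat_induct_non_zero)
  case 1
  hence "K = [1]" by (simp add: comps_Suc0)
  thus ?case using G_single[of q b] Pq_1[of q b] by (simp add: comps_Suc0 Lcoef_def st_def QFactA_single finer_def)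
next
  case (Suc n K b)
  let ?F = "\<lambda>K0 b. (\<Sum>J\<in>comps n. Lcoef q J K0 * G q J b)"
  have Ginc: "\<And>J. J \<in> comps n \<Longrightarrow> q ^ (b + 1) * G q (incf J) b = qint q (b + 1) * (G q J (b + 1) - G q J b)"
    using G_incf comps_is_comp comps_nonempty Suc.hyps(1) by blast
  from Suc.prems Suc.hyps(1) show ?case
  proof (cases rule: comps_SucE)
    case (1 K0)
    let ?k = "length K0"
    have K0: "is_comp K0" "K0 \<noteq> []" using 1 Suc.hyps(1) comps_nonempty by (auto simp: comps_def)
    have "(\<Sum>J\<in>comps (Suc n). Lcoef q J K * G q J b) =
        (\<Sum>J\<in>comps n. Lcoef q (1 # J) K * G q (1 # J) b + Lcoef q (incf J) K * G q (incf J) b)"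
      by (rule sum_comps_Suc[OF Suc.hyps(1)])
    also have "\<dots> = (\<Sum>J\<in>comps n. Lcoef q J K0 * (q ^ ?k * qint q (b + 1) * G q J b + G q (incf J) b))"
      using 1 Suc.hyps(1)
      by (intro sum.cong refl) (simp only: Lcoef_1_1 Lcoef_inc_1 G_1Cons, simp add: algebra_simps)
    finally have e: "(\<Sum>J\<in>comps (Suc n). Lcoef q J K * G q J b) = \<dots>" .
    have "q ^ (b + 1) * (\<Sum>J\<in>comps n. Lcoef q J K0 * (q ^ ?k * qint q (b + 1) * G q J b + G q (incf J) b))
      = (\<Sum>J\<in>comps n. Lcoef q J K0 * (q ^ (b + 1) * q ^ ?k * qint q (b + 1) * G q J b + q ^ (b + 1) * G q (incf J) b))"
      by (simp add: sum_distrib_left algebra_simps)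
    also have "\<dots> = (\<Sum>J\<in>comps n. Lcoef q J K0 * (q ^ (b + 1) * q ^ ?k * qint q (b + 1) * G q J b + qint q (b + 1) * (G q J (b + 1) - G q J b)))"
      by (intro sum.cong refl) (simp only: Ginc)
    also have "\<dots> = q ^ (b + 1) * q ^ ?k * qint q (b + 1) * ?F K0 b + qint q (b + 1) * (?F K0 (b + 1) - ?F K0 b)"
      by (simp add: sum_distrib_left sum_subtractf sum.distrib algebra_simps)
    also have "\<dots> = q ^ (b + 1) * q ^ ?k * qint q (b + 1) * (QFactA q K0 * Pq q ?k b) +
        qint q (b + 1) * (QFactA q K0 * Pq q ?k (b + 1) - QFactA q K0 * Pq q ?k b)"
      using Suc.IH 1 by simp
    also have "\<dots> = QFactA q K0 * (q ^ (b + 1) * q ^ ?k * qint q (b + 1) * Pq q ?k b +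
        (qint q (b + 1) * Pq q ?k (b + 1)) - qint q (b + 1) * Pq q ?k b)"
      by (simp add: algebra_simps)
    also have "\<dots> = QFactA q K0 * Pq q ?k b * (q ^ (b + 1) * q ^ ?k * qint q (b + 1) + qint q (?k + b + 1) - qint q (b + 1))"
      unfolding Pq_Y by (simp add: algebra_simps)
    also have "q ^ (b + 1) * q ^ ?k * qint q (b + 1) + qint q (?k + b + 1) - qint q (b + 1) = q ^ (b + 1) * qint q (?k + b + 1)"
    proof -
      have a: "qint q (?k + b + 1) = qint q (b + 1) + q ^ (b + 1) * qint q ?k"
        using qint_add[of q "b + 1" ?k] by (simp add: add.commute add.left_commute)
      have c: "qint q (?k + b + 1) = qint q ?k + q ^ ?k * qint q (b + 1)"
        using qint_add[of q ?k "b + 1"] by (simp add: add.assoc)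
      show ?thesis using a c by (simp add: algebra_simps)
    qed
    also have "QFactA q K0 * Pq q ?k b * (q ^ (b + 1) * qint q (?k + b + 1)) = q ^ (b + 1) * (QFactA q K0 * (qint q (?k + 1) * Pq q (?k + 1) b))"
      unfolding Pq_X by (simp add: algebra_simps)
    also have "\<dots> = q ^ (b + 1) * (QFactA q K * Pq q (length K) b)"
      using 1 QFactA_1Cons[of q K0] by simp
    finally show ?thesis using e q by simp
  next
    case (2 K0)
    let ?k = "length K0"
    have K0: "is_comp K0" "K0 \<noteq> []" using 2 Suc.hyps(1) comps_nonempty by (auto simp: comps_def)
    have "(\<Sum>J\<in>comps (Suc n). Lcoef q J K * G q J b) =
        (\<Sum>J\<in>comps n. Lcoef q (1 # J) K * G q (1 # J) b + Lcoef q (incf J) K * G q (incf J) b)"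
      by (rule sum_comps_Suc[OF Suc.hyps(1)])
    also have "\<dots> = (\<Sum>J\<in>comps n. Lcoef q J K0 * G q (incf J) b)"
      using 2 Suc.hyps(1)
      by (intro sum.cong refl) (simp only: Lcoef_1_inc Lcoef_inc_inc, simp)
    finally have e: "(\<Sum>J\<in>comps (Suc n). Lcoef q J K * G q J b) = \<dots>" .
    have "q ^ (b + 1) * (\<Sum>J\<in>comps n. Lcoef q J K0 * G q (incf J) b)
      = (\<Sum>J\<in>comps n. Lcoef q J K0 * (q ^ (b + 1) * G q (incf J) b))"
      by (simp add: sum_distrib_left algebra_simps)
    also have "\<dots> = (\<Sum>J\<in>comps n. Lcoef q J K0 * (qint q (b + 1) * (G q J (b + 1) - G q J b)))"
      by (intro sum.cong refl) (simp only: Ginc)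
    also have "\<dots> = qint q (b + 1) * (?F K0 (b + 1) - ?F K0 b)"
      by (simp add: sum_distrib_left sum_subtractf algebra_simps)
    also have "\<dots> = qint q (b + 1) * (QFactA q K0 * Pq q ?k (b + 1) - QFactA q K0 * Pq q ?k b)"
      using Suc.IH 2 by simp
    also have "\<dots> = QFactA q K0 * Pq q ?k b * (qint q (?k + b + 1) - qint q (b + 1))"
      using Pq_Y[of q b ?k] by (simp add: algebra_simps)
    also have "qint q (?k + b + 1) - qint q (b + 1) = q ^ (b + 1) * qint q ?k"
      using qint_add[of q "b + 1" ?k] by (simp add: add.commute add.left_commute)
    also have "QFactA q K0 * Pq q ?k b * (q ^ (b + 1) * qint q ?k) = q ^ (b + 1) * (QFactA q K * Pq q (length K) b)"
      using 2 K0 by (simp add: QFactA_incf algebra_simps)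
    finally show ?thesis using e q by simp
  qed
qed


definition Bc :: "'a::field \<Rightarrow> nat list \<Rightarrow> nat list \<Rightarrow> 'a" where
  "Bc q J J' = (if finer J J' then (- 1 / q) ^ (length J - length J') * (1 / q) ^ (st' J J') else 0)"

context
  fixes n :: nat and J J' :: "nat list"
  assumes n: "0 < n" and J: "J \<in> comps n" and J': "J' \<in> comps n"
begin

private lemma facts': "is_comp J" "is_comp J'" "J \<noteq> []" "J' \<noteq> []"
  using J J' n comps_nonempty by (auto simp: comps_def)

lemma Bc_1_1: "Bc q (1 # J) (1 # J') = (1 / q) ^ length J' * Bc q J J'"
  using facts' st'_1_1[of J J'] finer_1_1[of J J'] by (simp add: Bc_def power_add)

lemma Bc_1_inc: "Bc q (1 # J) (incf J') = - ((1 / q) ^ length J' * Bc q J J')"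
proof (cases "finer J J'")
  case True
  have le: "length J' \<le> length J" using finer_length[OF facts'(1,2,3,4) True] .
  define d where "d = length J - length J'"
  define s where "s = st' (1 # J) (incf J')"
  have lend: "length (1 # J) - length (incf J') = Suc d" using le by (simp add: d_def Suc_diff_le)
  have f1: "finer (1 # J) (incf J')" using finer_1_inc[OF facts'] True by simp
  have ss: "s + 1 = st' J J' + length J'" unfolding s_def by (rule st'_1_inc[OF facts'])
  have "Bc q (1 # J) (incf J') = (- 1 / q) ^ (Suc d) * (1 / q) ^ s"
    unfolding Bc_def if_P[OF f1] lend s_def ..
  also have "\<dots> = - ((- 1 / q) ^ d * ((1 / q) ^ s * (1 / q)))"
    by (simp add: algebra_simps)
  also have "(1 / q) ^ s * (1 / q) = (1 / q) ^ (st' J J' + length J')"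
    unfolding ss[symmetric] by simp
  also have "- ((- 1 / q) ^ d * (1 / q) ^ (st' J J' + length J')) = - ((1 / q) ^ length J' * Bc q J J')"
    unfolding Bc_def if_P[OF True] d_def by (simp add: power_add algebra_simps)
  finally show ?thesis .
next
  case False thus ?thesis using facts' finer_1_inc[of J J'] by (simp add: Bc_def)
qed

lemma Bc_inc_1: "Bc q (incf J) (1 # J') = 0"
  using facts' finer_inc_1[of J J'] by (simp add: Bc_def)

lemma Bc_inc_inc: "Bc q (incf J) (incf J') = Bc q J J'"
  using facts' st'_inc_inc[of J J'] finer_inc_inc[of J J'] by (simp add: Bc_def)

end

lemma incf_inj: "incf K = incf J \<Longrightarrow> K \<noteq> [] \<Longrightarrow> J \<noteq> [] \<Longrightarrow> K = J"
  by (cases K; cases J) auto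

lemma incf_ne_1: "K \<in> comps n \<Longrightarrow> 0 < n \<Longrightarrow> incf K \<noteq> 1 # J"
  by (cases K) (auto simp: comps_def)

lemma ABsum:
  fixes q :: "'a::field"
  assumes q: "q \<noteq> 0" and n: "0 < n" and K: "K \<in> comps n" and J': "J' \<in> comps n"
  shows "(\<Sum>J\<in>comps n. Lcoef q J K * Bc q J J') = (if J' = K then 1 else 0)"
  using n K J'
proof (induction n arbitrary: K J' rule: nat_induct_non_zero)
  case 1
  hence "K = [1]" "J' = [1]" by (auto simp: comps_Suc0)
  thus ?case by (simp add: comps_Suc0 Lcoef_def st_def Bc_def st'_def finer_def)
next
  case (Suc n K J')
  let ?D = "\<lambda>K0 J0. (\<Sum>J\<in>comps n. Lcoef q J K0 * Bc q J J0)"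
  have split: "(\<Sum>J\<in>comps (Suc n). Lcoef q J K * Bc q J J') =
        (\<Sum>J\<in>comps n. Lcoef q (1 # J) K * Bc q (1 # J) J' + Lcoef q (incf J) K * Bc q (incf J) J')"
    by (rule sum_comps_Suc[OF Suc.hyps(1)])
  from Suc.prems(1) Suc.hyps(1) show ?case
  proof (cases rule: comps_SucE)
    case (1 K0)
    note K0 = 1
    from Suc.prems(2) Suc.hyps(1) show ?thesis
    proof (cases rule: comps_SucE)
      case (1 J0)
      have "(\<Sum>J\<in>comps n. Lcoef q (1 # J) K * Bc q (1 # J) J' + Lcoef q (incf J) K * Bc q (incf J) J')
          = (\<Sum>J\<in>comps n. q ^ length K0 * (1 / q) ^ length J0 * (Lcoef q J K0 * Bc q J J0))"
        using K0 1 Suc.hyps(1)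
        by (intro sum.cong refl) (simp only: Lcoef_1_1 Lcoef_inc_1 Bc_1_1 Bc_inc_1, simp add: algebra_simps)
      also have "\<dots> = q ^ length K0 * (1 / q) ^ length J0 * ?D K0 J0" by (simp add: sum_distrib_left)
      also have "\<dots> = (if J' = K then 1 else 0)"
        using Suc.IH[OF K0(1) 1(1)] K0 1 q by (simp add: power_one_over)
      finally show ?thesis using split by simp
    next
      case (2 J0)
      have "(\<Sum>J\<in>comps n. Lcoef q (1 # J) K * Bc q (1 # J) J' + Lcoef q (incf J) K * Bc q (incf J) J')
          = (\<Sum>J\<in>comps n. (1 - q ^ length K0 * (1 / q) ^ length J0) * (Lcoef q J K0 * Bc q J J0))"
        using K0 2 Suc.hyps(1)
        by (intro sum.cong refl) (simp only: Lcoef_1_1 Lcoef_inc_1 Bc_1_inc Bc_inc_inc, simp add: algebra_simps)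
      also have "\<dots> = (1 - q ^ length K0 * (1 / q) ^ length J0) * ?D K0 J0" by (simp add: sum_distrib_left)
      also have "\<dots> = 0"
        using Suc.IH[OF K0(1) 2(1)] q by (simp add: power_one_over)
      finally show ?thesis using split K0 2 incf_ne_1[OF 2(1) Suc.hyps(1)] by simp
    qed
  next
    case (2 K0)
    note K0 = 2
    from Suc.prems(2) Suc.hyps(1) show ?thesis
    proof (cases rule: comps_SucE)
      case (1 J0)
      have "(\<Sum>J\<in>comps n. Lcoef q (1 # J) K * Bc q (1 # J) J' + Lcoef q (incf J) K * Bc q (incf J) J') = 0"
        using K0 1 Suc.hyps(1)
        by (intro sum.neutral ballI) (simp only: Lcoef_1_inc Bc_inc_1, simp)
      moreover have "J' \<noteq> K" using K0 1 incf_ne_1[OF K0(1) Suc.hyps(1), of J0] by metis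
      ultimately show ?thesis using split by simp
    next
      case (2 J0)
      have "(\<Sum>J\<in>comps n. Lcoef q (1 # J) K * Bc q (1 # J) J' + Lcoef q (incf J) K * Bc q (incf J) J')
          = ?D K0 J0"
        using K0 2 Suc.hyps(1)
        by (intro sum.cong refl) (simp only: Lcoef_1_inc Lcoef_inc_inc Bc_inc_inc, simp)
      also have "\<dots> = (if J' = K then 1 else 0)"
        using Suc.IH[OF K0(1) 2(1)] K0 2 incf_inj comps_nonempty Suc.hyps(1) by auto
      finally show ?thesis using split by simp
    qed
  qed
qed


definition lastocc :: "nat list \<Rightarrow> nat set" where
  "lastocc t = {j. j < length t \<and> t ! j \<notin> set (drop (Suc j) t)}"

lemma lastocc_bij: "bij_betw (\<lambda>j. t ! j) (lastocc t) (set t)"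
proof (rule bij_betwI')
  fix j j' assume j: "j \<in> lastocc t" and j': "j' \<in> lastocc t"
  show "(t ! j = t ! j') = (j = j')"
  proof
    assume e: "t ! j = t ! j'"
    show "j = j'"
    proof (rule ccontr)
      assume "j \<noteq> j'"
      then consider "j < j'" | "j' < j" by linarith
      thus False
      proof cases
        case 1
        have "t ! j' \<in> set (drop (Suc j) t)"
          using 1 j' by (auto simp: lastocc_def in_set_conv_nth intro!: exI[of _ "j' - Suc j"])
        thus False using j e by (simp add: lastocc_def)
      next
        case 2
        have "t ! j \<in> set (drop (Suc j') t)"
          using 2 j by (auto simp: lastocc_def in_set_conv_nth intro!: exI[of _ "j - Suc j'"])
        thus False using j' e by (simp add: lastocc_def)
      qed
    qed
  qed simp
next
  fix j assume "j \<in> lastocc t" thus "t ! j \<in> set t" by (simp add: lastocc_def)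
next
  fix x assume x: "x \<in> set t"
  define J where "J = {j. j < length t \<and> t ! j = x}"
  have fJ: "finite J" by (simp add: J_def)
  have neJ: "J \<noteq> {}" using x by (auto simp: J_def in_set_conv_nth)
  define j where "j = Max J"
  have jJ: "j \<in> J" using fJ neJ by (simp add: j_def)
  have jmax: "\<And>j'. j' \<in> J \<Longrightarrow> j' \<le> j" using fJ by (simp add: j_def)
  have "t ! j \<notin> set (drop (Suc j) t)"
  proof
    assume "t ! j \<in> set (drop (Suc j) t)"
    then obtain i where i: "i < length (drop (Suc j) t)" "drop (Suc j) t ! i = t ! j" by (auto simp: in_set_conv_nth)
    hence "Suc j + i \<in> J" using jJ by (auto simp: J_def)
    thus False using jmax by fastforce
  qed
  thus "\<exists>j\<in>lastocc t. x = t ! j" using jJ by (auto simp: lastocc_def J_def)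
qed

lemma card_lastocc: "card (lastocc t) = card (set t)"
  using bij_betw_same_card[OF lastocc_bij] .

lemma card_lastocc_lt: "card {j \<in> lastocc t. t ! j < a} = card {b \<in> set t. b < a}"
proof -
  have "bij_betw (\<lambda>j. t ! j) {j \<in> lastocc t. t ! j < a} {b \<in> set t. b < a}"
    using lastocc_bij[of t] unfolding bij_betw_def inj_on_def by auto
  thus ?thesis by (rule bij_betw_same_card)
qed

lemma wdes_lastocc: "t \<noteq> [] \<Longrightarrow> wdes t = Suc ` (lastocc t - {length t - 1})"
proof (rule set_eqI)
  fix p assume t: "t \<noteq> []"
  show "p \<in> wdes t \<longleftrightarrow> p \<in> Suc ` (lastocc t - {length t - 1})"
  proof
    assume "p \<in> wdes t"
    hence p: "1 \<le> p" "p < length t" "t ! (p - 1) \<notin> set (drop p t)" by (auto simp: wdes_def)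
    hence "p - 1 \<in> lastocc t - {length t - 1}" by (auto simp: lastocc_def)
    moreover have "p = Suc (p - 1)" using p by simp
    ultimately show "p \<in> Suc ` (lastocc t - {length t - 1})" by blast
  next
    assume "p \<in> Suc ` (lastocc t - {length t - 1})"
    then obtain j where j: "p = Suc j" "j < length t" "j \<noteq> length t - 1" "t ! j \<notin> set (drop (Suc j) t)"
      by (auto simp: lastocc_def)
    thus "p \<in> wdes t" by (auto simp: wdes_def)
  qed
qed

lemma last_in_lastocc: "t \<noteq> [] \<Longrightarrow> length t - 1 \<in> lastocc t"
  by (auto simp: lastocc_def)

lemma card_wdes: "t \<noteq> [] \<Longrightarrow> card (wdes t) + 1 = card (set t)"
proof -
  assume t: "t \<noteq> []"
  have f: "finite (lastocc t)" by (simp add: lastocc_def)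
  have "card (wdes t) = card (lastocc t - {length t - 1})"
    unfolding wdes_lastocc[OF t] by (simp add: card_image)
  also have "\<dots> = card (lastocc t) - 1" using last_in_lastocc[OF t] f by simp
  finally show ?thesis using card_lastocc[of t] last_in_lastocc[OF t] f
    by (metis One_nat_def Suc_pred card_gt_0_iff empty_iff add.commute plus_1_eq_Suc)
qed

lemma wdes_Cons: "wdes (a # t) = Suc ` wdes t \<union> (if a \<notin> set t \<and> t \<noteq> [] then {1} else {})"
proof (rule set_eqI)
  fix p
  show "p \<in> wdes (a # t) \<longleftrightarrow> p \<in> Suc ` wdes t \<union> (if a \<notin> set t \<and> t \<noteq> [] then {1} else {})"
  proof (cases p)
    case 0 thus ?thesis by (auto simp: wdes_def)
  next
    case (Suc p')
    show ?thesis
    proof (cases p')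
      case 0 thus ?thesis using Suc by (auto simp: wdes_def)
    next
      case (Suc p'')
      thus ?thesis using \<open>p = Suc p'\<close> by (auto simp: wdes_def)
    qed
  qed
qed

definition sinvset :: "nat list \<Rightarrow> (nat \<times> nat) set" where
  "sinvset u = {(i, j). i < j \<and> j < length u \<and> u ! i > u ! j \<and> u ! j \<notin> set (drop (Suc j) u)}"

lemma sinv_sinvset: "sinv u = card (sinvset u)" by (simp add: sinv_def sinvset_def)

lemma finite_sinvset[simp]: "finite (sinvset u)"
  by (rule finite_subset[of _ "{..<length u} \<times> {..<length u}"]) (auto simp: sinvset_def)

lemma sinv_Cons: "sinv (a # t) = sinv t + card {b \<in> set t. b < a}"
proof -
  have e: "sinvset (a # t) = (\<lambda>j. (0, Suc j)) ` {j \<in> lastocc t. t ! j < a} \<union> map_prod Suc Suc ` sinvset t"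
  proof (rule set_eqI)
    fix x :: "nat \<times> nat"
    obtain i j where x: "x = (i, j)" by (cases x)
    show "x \<in> sinvset (a # t) \<longleftrightarrow> x \<in> (\<lambda>j. (0, Suc j)) ` {j \<in> lastocc t. t ! j < a} \<union> map_prod Suc Suc ` sinvset t"
      unfolding x
    proof (cases j)
      case 0 thus "(i, j) \<in> sinvset (a # t) \<longleftrightarrow> (i, j) \<in> (\<lambda>j. (0, Suc j)) ` {j \<in> lastocc t. t ! j < a} \<union> map_prod Suc Suc ` sinvset t"
        by (auto simp: sinvset_def)
    next
      case (Suc j')
      show "(i, j) \<in> sinvset (a # t) \<longleftrightarrow> (i, j) \<in> (\<lambda>j. (0, Suc j)) ` {j \<in> lastocc t. t ! j < a} \<union> map_prod Suc Suc ` sinvset t"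
      proof (cases i)
        case 0 thus ?thesis using Suc by (auto simp: sinvset_def lastocc_def)
      next
        case (Suc i')
        thus ?thesis using \<open>j = Suc j'\<close> by (auto simp: sinvset_def lastocc_def)
      qed
    qed
  qed
  have d: "(\<lambda>j. (0, Suc j)) ` {j \<in> lastocc t. t ! j < a} \<inter> map_prod Suc Suc ` sinvset t = {}" by auto
  have f: "finite ((\<lambda>j. (0::nat, Suc j)) ` {j \<in> lastocc t. t ! j < a})"
    by (rule finite_imageI, rule finite_subset[of _ "{..<length t}"]) (auto simp: lastocc_def)
  have c1: "card ((\<lambda>j. (0::nat, Suc j)) ` {j \<in> lastocc t. t ! j < a}) = card {b \<in> set t. b < a}"
    by (subst card_image) (auto intro: inj_onI simp: card_lastocc_lt)
  have c2: "card (map_prod Suc Suc ` sinvset t) = card (sinvset t)"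
    by (rule card_image) (auto intro: inj_onI)
  show ?thesis unfolding sinv_sinvset e
    using card_Un_disjoint[OF f finite_imageI[OF finite_sinvset] d] c1 c2 by simp
qed

lemma wdes_map:
  assumes "inj_on f (set w)"
  shows "wdes (map f w) = wdes w"
proof -
  have "\<And>p. 1 \<le> p \<Longrightarrow> p < length w \<Longrightarrow> (f (w ! (p - 1)) \<in> f ` set (drop p w) \<longleftrightarrow> w ! (p - 1) \<in> set (drop p w))"
  proof -
    fix p assume p: "1 \<le> p" "p < length w"
    have "w ! (p - 1) \<in> set w" using p by simp
    moreover have "set (drop p w) \<subseteq> set w" by (rule set_drop_subset)
    ultimately show "(f (w ! (p - 1)) \<in> f ` set (drop p w) \<longleftrightarrow> w ! (p - 1) \<in> set (drop p w))"
      using assms by (auto simp: inj_on_def)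
  qed
  hence h: "\<And>p. 1 \<le> p \<Longrightarrow> p < length w \<Longrightarrow> ((map f w) ! (p - 1) \<in> set (drop p (map f w))) = (w ! (p - 1) \<in> set (drop p w))"
    by (simp add: drop_map)
  show ?thesis unfolding wdes_def length_map by (rule Collect_cong) (use h in blast)
qed

lemma sinv_map:
  assumes "\<And>x y. x \<in> set w \<Longrightarrow> y \<in> set w \<Longrightarrow> x < y \<Longrightarrow> f x < f y"
  shows "sinv (map f w) = sinv w"
proof -
  have inj: "inj_on f (set w)"
    by (rule inj_onI) (metis assms linorder_neqE_nat order_less_irrefl)
  have "sinvset (map f w) = sinvset w"
  proof (rule set_eqI)
    fix x :: "nat \<times> nat"
    obtain i j where x: "x = (i, j)" by (cases x)
    have "i < j \<Longrightarrow> j < length w \<Longrightarrow> (f (w ! i) > f (w ! j) \<longleftrightarrow> w ! i > w ! j) \<and>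
        (f (w ! j) \<in> f ` set (drop (Suc j) w) \<longleftrightarrow> w ! j \<in> set (drop (Suc j) w))"
    proof -
      assume ij: "i < j" "j < length w"
      have m: "w ! i \<in> set w" "w ! j \<in> set w" using ij by auto
      have "f (w ! i) > f (w ! j) \<longleftrightarrow> w ! i > w ! j"
        using assms[OF m(2) m(1)] assms[OF m(1) m(2)] by (metis linorder_neqE_nat order_less_asym order_less_irrefl)
      moreover have "set (drop (Suc j) w) \<subseteq> set w" by (rule set_drop_subset)
      hence "f (w ! j) \<in> f ` set (drop (Suc j) w) \<longleftrightarrow> w ! j \<in> set (drop (Suc j) w)"
        using inj m by (auto simp: inj_on_def)
      ultimately show ?thesis by simp
    qed
    thus "x \<in> sinvset (map f w) \<longleftrightarrow> x \<in> sinvset w"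
      unfolding x sinvset_def by (auto simp: drop_map)
  qed
  thus ?thesis by (simp add: sinv_sinvset)
qed

definition rk :: "nat set \<Rightarrow> nat \<Rightarrow> nat" where
  "rk S x = card {y \<in> S. y \<le> x}"

lemma pack_rk: "pack w = map (rk (set w)) w"
  by (simp add: pack_def rk_def)

lemma rk_mono: "finite S \<Longrightarrow> x \<in> S \<Longrightarrow> y \<in> S \<Longrightarrow> x < y \<Longrightarrow> rk S x < rk S y"
proof -
  assume a: "finite S" "x \<in> S" "y \<in> S" "x < y"
  have "{z \<in> S. z \<le> x} \<subseteq> {z \<in> S. z \<le> y}" using a by auto
  moreover have "y \<in> {z \<in> S. z \<le> y}" "y \<notin> {z \<in> S. z \<le> x}" using a by auto
  ultimately have "{z \<in> S. z \<le> x} \<subset> {z \<in> S. z \<le> y}" by blast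
  thus ?thesis unfolding rk_def using a(1) by (intro psubset_card_mono) auto
qed

lemma rk_image: "finite S \<Longrightarrow> rk S ` S = {1..card S}"
proof (induction S rule: finite_linorder_max_induct)
  case empty thus ?case by simp
next
  case (insert b A)
  have bA: "b \<notin> A" using insert by auto
  have r1: "rk (insert b A) x = rk A x" if "x \<in> A" for x
  proof -
    have "{y \<in> insert b A. y \<le> x} = {y \<in> A. y \<le> x}" using that insert.hyps(2) by auto
    thus ?thesis by (simp add: rk_def)
  qed
  have r2: "rk (insert b A) b = card A + 1"
  proof -
    have "{y \<in> insert b A. y \<le> b} = insert b A" using insert.hyps(2) by auto
    thus ?thesis using bA insert.hyps(1) by (simp add: rk_def)
  qed
  have "rk (insert b A) ` insert b A = insert (card A + 1) (rk A ` A)"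
    using r1 r2 by (auto simp: image_iff)
  also have "\<dots> = {1..card (insert b A)}" using insert.IH bA insert.hyps(1) by auto
  finally show ?case .
qed

lemma set_pack: "set (pack w) = {1..card (set w)}"
  by (simp add: pack_rk rk_image)

lemma packed_pack: "packed (pack w)"
  by (simp add: packed_def set_pack)

lemma length_pack[simp]: "length (pack w) = length w"
  by (simp add: pack_def)

lemma sinv_pack: "sinv (pack w) = sinv w"
  unfolding pack_rk by (rule sinv_map) (auto intro: rk_mono)

lemma pack_single: "pack [x] = [1]"
proof -
  have "{y \<in> set [x]. y \<le> x} = {x}" by auto
  thus ?thesis by (simp add: pack_def)
qed

lemma sinv_single: "length u = 1 \<Longrightarrow> sinv u = 0"
proof -
  assume "length u = 1"
  hence "sinvset u = {}" by (auto simp: sinvset_def)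
  thus ?thesis by (simp add: sinv_sinvset)
qed

lemma tildeS1_pack: "tildeS 1 (pack v) = (if length v = 1 then 1 else 0)"
proof -
  have l: "length (pack v) = 1 \<Longrightarrow> sorted (pack v)"
    by (cases "pack v") auto
  have "length v = 1 \<Longrightarrow> sorted (pack v)" using l by simp
  thus ?thesis using packed_pack[of v] by (auto simp: tildeS_def)
qed

lemma powi_cancel:
  fixes q :: "'a::field"
  assumes "q \<noteq> 0"
  shows "q ^ a * q powi (int b - int a) = q ^ b"
proof -
  have "q powi (int b - int a + int a) = q powi (int b - int a) * q powi (int a)"
    by (rule power_int_add) (use assms in simp)
  thus ?thesis by (simp add: mult.commute)
qed

lemmas tildeS1_pack' = tildeS1_pack[unfolded One_nat_def]

lemma packed_Nil[simp]: "packed []" by (simp add: packed_def)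

lemma star_list_rep:
  fixes q :: "'a::field"
  assumes q: "q \<noteq> 0"
  shows "star_list q (replicate n (tildeS 1)) u = (if packed u \<and> length u = n then q ^ sinv u else 0)"
proof (induction n arbitrary: u)
  case 0
  show ?case by (simp add: star_list_def unitM_def sinv_def)
next
  case (Suc n u)
  let ?g = "star_list q (replicate n (tildeS 1))"
  have e: "star_list q (replicate (Suc n) (tildeS 1)) u = star_q q (tildeS 1) ?g u"
    by (simp add: star_list_def)
  show ?case
  proof (cases "packed u")
    case False thus ?thesis unfolding e by (simp add: star_q_def)
  next
    case True
    define X where "X = ?g (pack (drop 1 u)) * q powi (int (sinv u) - int (sinv (pack (take 1 u))) - int (sinv (pack (drop 1 u))))"
    have "star_q q (tildeS 1) ?g u = (\<Sum>k\<le>length u. if k = 1 then X else 0)"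
      unfolding star_q_def if_P[OF True]
    proof (rule sum.cong[OF refl])
      fix k assume k: "k \<in> {..length u}"
      show "tildeS 1 (pack (take k u)) * ?g (pack (drop k u)) * q powi (int (sinv u) - int (sinv (pack (take k u))) - int (sinv (pack (drop k u)))) = (if k = 1 then X else 0)"
        using k by (auto simp: tildeS1_pack tildeS1_pack' X_def min_def)
    qed
    also have "\<dots> = (if 1 \<le> length u then X else 0)" by (simp add: sum.delta)
    also have "\<dots> = (if length u = Suc n then q ^ sinv u else 0)"
    proof (cases "length u = Suc n")
      case True
      have s1: "sinv (pack (take 1 u)) = 0" using True by (intro sinv_single) simp
      have g: "?g (pack (drop 1 u)) = q ^ sinv (drop 1 u)"
        using Suc.IH packed_pack True by (simp add: sinv_pack)
      have "X = q powi int (sinv (drop 1 u)) * q powi (int (sinv u) - int (sinv (drop 1 u)))"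
      proof -
        have s1': "sinv (take (Suc 0) u) = 0" using True by (intro sinv_single) simp
        show ?thesis unfolding X_def g sinv_pack using s1' by simp
      qed
      also have "\<dots> = q ^ sinv u"
        using powi_cancel[OF q, of "sinv (drop 1 u)" "sinv u"] by simp
      finally show ?thesis using True by simp
    next
      case False
      have "1 \<le> length u \<Longrightarrow> ?g (pack (drop 1 u)) = 0"
      proof -
        assume "1 \<le> length u"
        hence "length (pack (drop 1 u)) \<noteq> n" using False by simp
        thus ?thesis using Suc.IH[of "pack (drop 1 u)"] by simp
      qed
      thus ?thesis using False by (auto simp: X_def)
    qed
    finally show ?thesis unfolding e using True by simp
  qed
qed


section \<open>Recursion on packed words\<close>

definition Z :: "nat \<Rightarrow> nat list set" where
  "Z n = {u. packed u \<and> length u = n}"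

lemma packed_set: "packed u \<Longrightarrow> set u = {1..card (set u)}" by (simp add: packed_def)

lemma finite_Z[simp]: "finite (Z n)"
proof -
  have "Z n \<subseteq> {u. set u \<subseteq> {0..n} \<and> length u \<le> n}"
  proof clarify
    fix u assume u: "u \<in> Z n"
    hence "set u = {1..card (set u)}" "length u = n" by (auto simp: Z_def packed_def)
    moreover have "card (set u) \<le> length u" by (rule card_length)
    ultimately have "\<forall>x\<in>set u. x \<le> n" by (metis atLeastAtMost_iff order.trans)
    thus "set u \<subseteq> {0..n} \<and> length u \<le> n" using \<open>length u = n\<close> by auto
  qed
  thus ?thesis by (rule finite_subset) (rule finite_lists_length_le, simp)
qed

lemma qint_sum1: "(\<Sum>a\<in>{1..m}. q ^ (a - 1)) = qint q m"
  by (induction m) (simp_all add: qint_Suc)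

lemma zero_notin_wdes: "0 \<notin> wdes t" by (simp add: wdes_def)

definition sh :: "nat \<Rightarrow> nat \<Rightarrow> nat" where "sh a x = (if a \<le> x then Suc x else x)"
definition unsh :: "nat \<Rightarrow> nat \<Rightarrow> nat" where "unsh a x = (if a < x then x - 1 else x)"

lemma unsh_sh[simp]: "unsh a (sh a x) = x" by (simp add: sh_def unsh_def)
lemma sh_unsh: "x \<noteq> a \<Longrightarrow> sh a (unsh a x) = x" by (auto simp: sh_def unsh_def)

lemma sh_image: "a \<in> {1..Suc m} \<Longrightarrow> sh a ` {1..m} = {1..Suc m} - {a}"
proof (rule set_eqI)
  fix y assume a: "a \<in> {1..Suc m}"
  show "y \<in> sh a ` {1..m} \<longleftrightarrow> y \<in> {1..Suc m} - {a}"
  proof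
    assume "y \<in> sh a ` {1..m}" thus "y \<in> {1..Suc m} - {a}" using a by (auto simp: sh_def)
  next
    assume y: "y \<in> {1..Suc m} - {a}"
    show "y \<in> sh a ` {1..m}"
    proof (cases "y < a")
      case True thus ?thesis using y a by (auto simp: sh_def image_iff intro!: bexI[of _ y])
    next
      case False thus ?thesis using y a by (auto simp: sh_def image_iff intro!: bexI[of _ "y - 1"])
    qed
  qed
qed

lemma unsh_image: "a \<in> {1..Suc m} \<Longrightarrow> unsh a ` ({1..Suc m} - {a}) = {1..m}"
proof -
  assume a: "a \<in> {1..Suc m}"
  have "unsh a ` ({1..Suc m} - {a}) = unsh a ` sh a ` {1..m}" using sh_image[OF a] by simp
  also have "\<dots> = {1..m}" by (simp add: image_image)
  finally show ?thesis .
qed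

lemma unsh_inj: "unsh a x = unsh a y \<Longrightarrow> x \<noteq> a \<Longrightarrow> y \<noteq> a \<Longrightarrow> x = y"
  by (auto simp: unsh_def split: if_splits)

lemma sh_mono: "x < y \<Longrightarrow> sh a x < sh a y" by (auto simp: sh_def)
lemma unsh_mono: "x < y \<Longrightarrow> x \<noteq> a \<Longrightarrow> y \<noteq> a \<Longrightarrow> unsh a x < unsh a y" by (auto simp: unsh_def)

lemma card_lt_packed: "set w = {1..m} \<Longrightarrow> a \<in> {1..Suc m} \<Longrightarrow> card {b \<in> set w. b < a} = a - 1"
proof -
  assume w: "set w = {1..m}" and a: "a \<in> {1..Suc m}"
  have "{b \<in> set w. b < a} = {1..<a}" using w a by auto
  thus ?thesis by simp
qed

lemma Z_inc_sum:
  fixes q :: "'a::field"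
  assumes n: "0 < n" and D0: "0 \<notin> D"
  shows "(\<Sum>u\<in>{u \<in> Z (Suc n). wdes u = Suc ` D}. q ^ sinv u) =
         (\<Sum>w\<in>{w \<in> Z n. wdes w = D}. q ^ sinv w * qint q (card (set w)))"
proof -
  let ?A = "{u \<in> Z (Suc n). wdes u = Suc ` D}"
  let ?B = "SIGMA w:{w \<in> Z n. wdes w = D}. {1..card (set w)}"
  have "(\<Sum>u\<in>?A. q ^ sinv u) = (\<Sum>p\<in>?B. q ^ (sinv (fst p) + (snd p - 1)))"
  proof (rule sum.reindex_bij_witness[where i = "\<lambda>p. snd p # fst p" and j = "\<lambda>u. (tl u, hd u)"])
    fix u assume "u \<in> ?A"
    hence "u \<noteq> []" by (auto simp: Z_def)
    thus "snd (tl u, hd u) # fst (tl u, hd u) = u" by simp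
  next
    fix u assume u: "u \<in> ?A"
    then obtain a t where ut: "u = a # t" by (cases u) (auto simp: Z_def)
    have t: "t \<noteq> []" "length t = n" using u ut n by (auto simp: Z_def)
    have at: "a \<in> set t"
    proof (rule ccontr)
      assume "a \<notin> set t"
      hence "1 \<in> wdes u" using ut t by (simp add: wdes_Cons)
      thus False using u D0 by auto
    qed
    have wt: "wdes t = D"
    proof -
      have "Suc ` wdes t = Suc ` D" using u ut at by (simp add: wdes_Cons)
      thus ?thesis by (simp add: inj_image_eq_iff)
    qed
    have pt: "packed t" using u ut at by (auto simp: Z_def packed_def insert_absorb)
    have "a \<in> {1..card (set t)}" using pt at by (simp add: packed_def)
    thus "(tl u, hd u) \<in> ?B" using ut pt t wt by (simp add: Z_def)
  next
    fix p assume "p \<in> ?B" thus "(tl (snd p # fst p), hd (snd p # fst p)) = p" by simp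
  next
    fix p assume p: "p \<in> ?B"
    obtain w a where pw: "p = (w, a)" by (cases p)
    have w: "packed w" "length w = n" "wdes w = D" "a \<in> {1..card (set w)}" using p pw by (auto simp: Z_def)
    have aw: "a \<in> set w" using w by (simp add: packed_def)
    have "w \<noteq> []" using w n by auto
    thus "snd p # fst p \<in> ?A" using pw w aw by (simp add: Z_def packed_def insert_absorb wdes_Cons)
  next
    fix u assume u: "u \<in> ?A"
    then obtain a t where ut: "u = a # t" by (cases u) (auto simp: Z_def)
    have t: "t \<noteq> []" using u ut n by (auto simp: Z_def)
    have at: "a \<in> set t"
    proof (rule ccontr)
      assume "a \<notin> set t"
      hence "1 \<in> wdes u" using ut t by (simp add: wdes_Cons)
      thus False using u D0 by auto
    qed
    have pt: "packed t" using u ut at by (auto simp: Z_def packed_def insert_absorb)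
    have "a \<in> {1..card (set t)}" using at packed_set[OF pt] by blast
    hence "a \<in> {1..Suc (card (set t))}" by simp
    hence "card {b \<in> set t. b < a} = a - 1"
      using card_lt_packed[OF packed_set[OF pt], of a] by simp
    thus "q ^ (sinv (fst (tl u, hd u)) + (snd (tl u, hd u) - 1)) = q ^ sinv u"
      using ut by (simp add: sinv_Cons)
  qed
  also have "\<dots> = (\<Sum>w\<in>{w \<in> Z n. wdes w = D}. \<Sum>a\<in>{1..card (set w)}. q ^ (sinv w + (a - 1)))"
    by (subst sum.Sigma) (auto simp: case_prod_beta intro!: sum.cong)
  also have "\<dots> = (\<Sum>w\<in>{w \<in> Z n. wdes w = D}. q ^ sinv w * qint q (card (set w)))"
    by (intro sum.cong refl) (simp only: power_add sum_distrib_left[symmetric] qint_sum1)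
  finally show ?thesis .
qed

lemma Z_one_sum:
  fixes q :: "'a::field"
  assumes n: "0 < n" and D0: "0 \<notin> D"
  shows "(\<Sum>u\<in>{u \<in> Z (Suc n). wdes u = insert 1 (Suc ` D)}. q ^ sinv u) =
         (\<Sum>w\<in>{w \<in> Z n. wdes w = D}. q ^ sinv w * qint q (Suc (card (set w))))"
proof -
  let ?A = "{u \<in> Z (Suc n). wdes u = insert 1 (Suc ` D)}"
  let ?B = "SIGMA w:{w \<in> Z n. wdes w = D}. {1..Suc (card (set w))}"
  have key: "a \<notin> set t \<and> t \<noteq> [] \<and> packed (map (unsh a) t) \<and> card (set (map (unsh a) t)) = card (set t) \<and>
      a \<in> {1..Suc (card (set t))} \<and> wdes t = D \<and> length t = n"
    if u: "a # t \<in> ?A" for a t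
  proof -
    have t: "t \<noteq> []" "length t = n" using u n by (auto simp: Z_def)
    have at: "a \<notin> set t"
    proof
      assume "a \<in> set t"
      hence "wdes (a # t) = Suc ` wdes t" by (simp add: wdes_Cons)
      hence "1 \<in> Suc ` wdes t" using u by auto
      thus False using zero_notin_wdes[of t] by auto
    qed
    have "insert 1 (Suc ` wdes t) = insert 1 (Suc ` D)" using u at t by (simp add: wdes_Cons)
    moreover have "1 \<notin> Suc ` wdes t" "1 \<notin> Suc ` D" using zero_notin_wdes[of t] D0 by auto
    ultimately have "Suc ` wdes t = Suc ` D" using insert_ident by metis
    hence wt: "wdes t = D" by (simp add: inj_image_eq_iff)
    define m where "m = card (set t)"
    have cu: "card (set (a # t)) = Suc m" using at by (simp add: m_def)
    have su: "set (a # t) = {1..Suc m}" using u cu by (auto simp: Z_def packed_def)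
    have a1: "a \<in> {1..Suc m}" using su by auto
    have st: "set t = {1..Suc m} - {a}" using su at by auto
    have sm: "set (map (unsh a) t) = {1..m}" using unsh_image[OF a1] st by simp
    have "packed (map (unsh a) t)" using sm by (simp add: packed_def)
    thus ?thesis using sm at t wt a1 by (simp add: m_def)
  qed
  have "(\<Sum>u\<in>?A. q ^ sinv u) = (\<Sum>p\<in>?B. q ^ (sinv (fst p) + (snd p - 1)))"
  proof (rule sum.reindex_bij_witness[where i = "\<lambda>p. snd p # map (sh (snd p)) (fst p)" and j = "\<lambda>u. (map (unsh (hd u)) (tl u), hd u)"])
    fix u assume u: "u \<in> ?A"
    then obtain a t where ut: "u = a # t" by (cases u) (auto simp: Z_def)
    have "a \<notin> set t" using key u ut by blast
    hence "map (sh a) (map (unsh a) t) = t" by (induction t) (auto simp: sh_unsh)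
    thus "snd (map (unsh (hd u)) (tl u), hd u) # map (sh (snd (map (unsh (hd u)) (tl u), hd u))) (fst (map (unsh (hd u)) (tl u), hd u)) = u"
      using ut by simp
  next
    fix u assume u: "u \<in> ?A"
    then obtain a t where ut: "u = a # t" by (cases u) (auto simp: Z_def)
    have k: "a \<notin> set t \<and> t \<noteq> [] \<and> packed (map (unsh a) t) \<and> card (set (map (unsh a) t)) = card (set t) \<and>
      a \<in> {1..Suc (card (set t))} \<and> wdes t = D \<and> length t = n" using key u ut by blast
    have inj: "inj_on (unsh a) (set t)" using k by (metis inj_onI unsh_inj)
    have "wdes (map (unsh a) t) = D" using wdes_map[OF inj] k by simp
    thus "(map (unsh (hd u)) (tl u), hd u) \<in> ?B" using k ut by (simp add: Z_def)
  next
    fix p assume "p \<in> ?B"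
    have "map (unsh (snd p)) (map (sh (snd p)) (fst p)) = fst p" by (simp add: o_def)
    thus "(map (unsh (hd (snd p # map (sh (snd p)) (fst p)))) (tl (snd p # map (sh (snd p)) (fst p))),
          hd (snd p # map (sh (snd p)) (fst p))) = p" by simp
  next
    fix p assume p: "p \<in> ?B"
    obtain w a where pw: "p = (w, a)" by (cases p)
    have w: "packed w" "length w = n" "wdes w = D" "a \<in> {1..Suc (card (set w))}" using p pw by (auto simp: Z_def)
    define m where "m = card (set w)"
    have sw: "set w = {1..m}" using w by (simp add: packed_def m_def)
    have a1: "a \<in> {1..Suc m}" using w by (simp add: m_def)
    have ssh: "set (map (sh a) w) = {1..Suc m} - {a}" using sh_image[OF a1] sw by simp
    have aw: "a \<notin> set (map (sh a) w)" using ssh by simp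
    have "set (a # map (sh a) w) = {1..Suc m}" using ssh a1 by auto
    hence pk: "packed (a # map (sh a) w)" by (simp add: packed_def)
    have inj: "inj_on (sh a) (set w)" by (auto simp: inj_on_def sh_def split: if_splits)
    have ne: "map (sh a) w \<noteq> []" using w n by auto
    have "wdes (a # map (sh a) w) = insert 1 (Suc ` D)"
      using aw ne wdes_map[OF inj] w by (simp add: wdes_Cons)
    thus "snd p # map (sh (snd p)) (fst p) \<in> ?A" using pk pw w by (simp add: Z_def)
  next
    fix u assume u: "u \<in> ?A"
    then obtain a t where ut: "u = a # t" by (cases u) (auto simp: Z_def)
    have k: "a \<notin> set t \<and> t \<noteq> [] \<and> packed (map (unsh a) t) \<and> card (set (map (unsh a) t)) = card (set t) \<and>
      a \<in> {1..Suc (card (set t))} \<and> wdes t = D \<and> length t = n" using key u ut by blast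
    have si: "sinv (map (unsh a) t) = sinv t"
      by (rule sinv_map) (use k in \<open>auto intro: unsh_mono\<close>)
    have "card {b \<in> set t. b < a} = a - 1"
    proof -
      have "{b \<in> set t. b < a} = {1..<a}"
      proof -
        define m where "m = card (set t)"
        have pu: "packed u" using u by (simp add: Z_def)
        have cu: "card (set u) = Suc m" using k ut by (simp add: m_def)
        have su: "set u = {1..Suc m}" using pu cu by (simp add: packed_def)
        have st: "set t = set u - {a}" using k ut by auto
        have a1: "a \<in> {1..Suc m}" using k by (simp add: m_def)
        show ?thesis unfolding st su using a1 by auto
      qed
      thus ?thesis by simp
    qed
    thus "q ^ (sinv (fst (map (unsh (hd u)) (tl u), hd u)) + (snd (map (unsh (hd u)) (tl u), hd u) - 1)) = q ^ sinv u"
      using ut si by (simp add: sinv_Cons)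
  qed
  also have "\<dots> = (\<Sum>w\<in>{w \<in> Z n. wdes w = D}. \<Sum>a\<in>{1..Suc (card (set w))}. q ^ (sinv w + (a - 1)))"
    by (subst sum.Sigma) (auto simp: case_prod_beta intro!: sum.cong)
  also have "\<dots> = (\<Sum>w\<in>{w \<in> Z n. wdes w = D}. q ^ sinv w * qint q (Suc (card (set w))))"
    by (intro sum.cong refl) (simp only: power_add sum_distrib_left[symmetric] qint_sum1)
  finally show ?thesis .
qed


lemma Z1: "{u \<in> Z (Suc 0). wdes u = {}} = {[1]}"
proof (rule set_eqI, rule iffI)
  fix u assume u: "u \<in> {u \<in> Z (Suc 0). wdes u = {}}"
  then obtain x where ux: "u = [x]" by (cases u) (auto simp: Z_def)
  hence "{x} = {1..card {x}}" using u by (simp add: Z_def packed_def)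
  hence "x = 1" by (metis atLeastAtMost_singleton card.empty card_insert_disjoint empty_iff finite.emptyI singleton_inject One_nat_def)
  thus "u \<in> {[1]}" using ux by simp
next
  fix u assume "u \<in> {[1::nat]}"
  thus "u \<in> {u \<in> Z (Suc 0). wdes u = {}}" by (auto simp: Z_def packed_def wdes_def)
qed

lemma W_QF:
  fixes q :: "'a::field"
  assumes "0 < n" "K \<in> comps n"
  shows "(\<Sum>u\<in>{u \<in> Z n. wdes u = des_set K}. q ^ sinv u) = QFactA q K"
  using assms
proof (induction n arbitrary: K rule: nat_induct_non_zero)
  case 1
  hence K: "K = [1]" by (simp add: comps_Suc0)
  have "sinv [1::nat] = 0" by (rule sinv_single) simp
  thus ?case unfolding K using Z1 by (simp add: QFactA_single)
next
  case (Suc n K)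
  let ?W = "\<lambda>D. (\<Sum>w\<in>{w \<in> Z n. wdes w = D}. q ^ sinv w)"
  have cardw: "card (set w) = length K0" if "w \<in> {w \<in> Z n. wdes w = des_set K0}" "K0 \<in> comps n" for w K0
  proof -
    have "w \<noteq> []" using that Suc.hyps(1) by (auto simp: Z_def)
    hence "card (set w) = card (wdes w) + 1" using card_wdes by simp
    also have "\<dots> = length K0" using that card_des_set[of K0] comps_nonempty[OF that(2) Suc.hyps(1)]
      by (simp add: comps_def)
    finally show ?thesis .
  qed
  from Suc.prems(1) Suc.hyps(1) show ?case
  proof (cases rule: comps_SucE)
    case (1 K0)
    have K0: "is_comp K0" "K0 \<noteq> []" using 1 Suc.hyps(1) comps_nonempty by (auto simp: comps_def)
    have dK: "des_set K = insert 1 (Suc ` des_set K0)" using 1 K0 des_set_1Cons by simp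
    have "(\<Sum>u\<in>{u \<in> Z (Suc n). wdes u = des_set K}. q ^ sinv u) =
        (\<Sum>w\<in>{w \<in> Z n. wdes w = des_set K0}. q ^ sinv w * qint q (Suc (card (set w))))"
      unfolding dK by (rule Z_one_sum[OF Suc.hyps(1) zero_notin_des[OF K0(1)]])
    also have "\<dots> = (\<Sum>w\<in>{w \<in> Z n. wdes w = des_set K0}. q ^ sinv w * qint q (length K0 + 1))"
      by (intro sum.cong refl) (simp add: cardw[OF _ 1(1)])
    also have "\<dots> = qint q (length K0 + 1) * QFactA q K0"
      using Suc.IH[OF 1(1)] by (simp add: sum_distrib_right[symmetric] mult.commute)
    also have "\<dots> = QFactA q K" using 1 QFactA_1Cons[of q K0] by simp
    finally show ?thesis .
  next
    case (2 K0)
    have K0: "is_comp K0" "K0 \<noteq> []" using 2 Suc.hyps(1) comps_nonempty by (auto simp: comps_def)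
    have dK: "des_set K = Suc ` des_set K0" using 2 K0 des_set_incf by simp
    have "(\<Sum>u\<in>{u \<in> Z (Suc n). wdes u = des_set K}. q ^ sinv u) =
        (\<Sum>w\<in>{w \<in> Z n. wdes w = des_set K0}. q ^ sinv w * qint q (card (set w)))"
      unfolding dK by (rule Z_inc_sum[OF Suc.hyps(1) zero_notin_des[OF K0(1)]])
    also have "\<dots> = (\<Sum>w\<in>{w \<in> Z n. wdes w = des_set K0}. q ^ sinv w * qint q (length K0))"
      by (intro sum.cong refl) (simp add: cardw[OF _ 2(1)])
    also have "\<dots> = (\<Sum>w\<in>{w \<in> Z n. wdes w = des_set K0}. q ^ sinv w) * qint q (length K0)"
      by (rule sum_distrib_right[symmetric])
    also have "\<dots> = qint q (length K0) * QFactA q K0"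
      using Suc.IH[OF 2(1)] by (simp add: mult.commute)
    also have "\<dots> = QFactA q K" using 2 QFactA_incf[OF K0(2), of q] by simp
    finally show ?thesis .
  qed
qed

lemma SJ_QF:
  fixes q :: "'a::field_char_0"
  assumes q: "q \<noteq> 0" and n: "0 < n" and K: "K \<in> comps n"
  shows "SJ q (replicate n 1) K = QFactA q K"
proof -
  have sK: "sum_list K = n" using K by (simp add: comps_def)
  have set_eq: "{u. packed u \<and> length u = sum_list K \<and> WC u = K} = {u \<in> Z n. wdes u = des_set K}"
  proof (rule set_eqI)
    fix u
    have wsub: "wdes u \<subseteq> {1..<length u}" by (auto simp: wdes_def)
    show "u \<in> {u. packed u \<and> length u = sum_list K \<and> WC u = K} \<longleftrightarrow> u \<in> {u \<in> Z n. wdes u = des_set K}"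
    proof
      assume u: "u \<in> {u. packed u \<and> length u = sum_list K \<and> WC u = K}"
      hence "comp_of_des n (wdes u) = K" "length u = n" using sK by (auto simp: WC_def)
      hence "des_set K = wdes u \<inter> {1..<n}" using comp_of_des_props[OF n, of "wdes u"] by simp
      hence "des_set K = wdes u" using wsub \<open>length u = n\<close> by auto
      thus "u \<in> {u \<in> Z n. wdes u = des_set K}" using u sK by (simp add: Z_def)
    next
      assume u: "u \<in> {u \<in> Z n. wdes u = des_set K}"
      hence "WC u = K" using comp_of_des_des_set[OF K n] by (simp add: WC_def Z_def)
      thus "u \<in> {u. packed u \<and> length u = sum_list K \<and> WC u = K}" using u sK by (simp add: Z_def)
    qed
  qed
  have "SJ q (replicate n 1) K = (\<Sum>u\<in>{u \<in> Z n. wdes u = des_set K}. star_list q (replicate n (tildeS 1)) u)"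
    unfolding SJ_def zeta_def set_eq by simp
  also have "\<dots> = (\<Sum>u\<in>{u \<in> Z n. wdes u = des_set K}. q ^ sinv u)"
    by (intro sum.cong refl) (simp add: star_list_rep[OF q] star_list_rep[OF q, unfolded One_nat_def] Z_def)
  also have "\<dots> = QFactA q K" by (rule W_QF[OF n K])
  finally show ?thesis .
qed

lemma finer_strict_length:
  assumes "J \<in> comps n" "K \<in> comps n" "0 < n" "finer K J" "J \<noteq> K"
  shows "length J < length K"
proof -
  have cJ: "is_comp J" "J \<noteq> []" "sum_list J = n" and cK: "is_comp K" "K \<noteq> []" "sum_list K = n"
    using assms comps_nonempty by (auto simp: comps_def)
  have "des_set J \<noteq> des_set K" using des_set_inj[of J K] cJ cK assms(5) by auto
  hence "des_set J \<subset> des_set K" using assms(4) by (auto simp: finer_def)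
  hence "card (des_set J) < card (des_set K)" by (simp add: psubset_card_mono)
  thus ?thesis using card_des_set[OF cJ(1,2)] card_des_set[OF cK(1,2)] by simp
qed

lemma uniq_zero:
  fixes q :: "'a::field"
  assumes q: "q \<noteq> 0" and n: "0 < n"
    and h: "\<forall>K\<in>comps n. (\<Sum>J\<in>comps n. d J * Lcoef q J K) = 0"
  shows "K \<in> comps n \<Longrightarrow> d K = 0"
proof (induction "length K" arbitrary: K rule: less_induct)
  case less
  have cK: "is_comp K" "sum_list K = n" using less.prems by (auto simp: comps_def)
  have "(\<Sum>J\<in>comps n. d J * Lcoef q J K) = d K * Lcoef q K K + (\<Sum>J\<in>comps n - {K}. d J * Lcoef q J K)"
    using less.prems by (simp add: sum.remove)
  also have "(\<Sum>J\<in>comps n - {K}. d J * Lcoef q J K) = 0"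
  proof (rule sum.neutral, rule ballI)
    fix J assume J: "J \<in> comps n - {K}"
    show "d J * Lcoef q J K = 0"
    proof (cases "finer K J")
      case True
      hence "length J < length K" using finer_strict_length[of J n K] J less.prems n by auto
      hence "d J = 0" using less.hyps J by auto
      thus ?thesis by simp
    next
      case False thus ?thesis by (simp add: Lcoef_def)
    qed
  qed
  finally have "d K * Lcoef q K K = 0" using h less.prems by simp
  moreover have "Lcoef q K K = q ^ st K K" using cK by (simp add: Lcoef_def finer_def)
  ultimately show ?case using q by simp
qed

theorem mainTheorem1:
  fixes q :: "'a::field_char_0" and I :: "nat list"
  assumes "q \<noteq> 0" and "is_comp I" and "I \<noteq> []"
  shows "PTA q I = eA q I \<and> eA q I = RHS q I"
proof -
  define n where "n = sum_list I"
  have I: "I \<in> comps n" using assms by (simp add: comps_def n_def)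
  have n: "0 < n"
  proof -
    obtain a r where "I = a # r" using assms(3) by (cases I) auto
    thus ?thesis using assms(2) by (simp add: n_def)
  qed
  define P where "P c \<longleftrightarrow> (\<forall>J. J \<notin> comps n \<longrightarrow> c J = 0) \<and>
             (\<forall>K \<in> comps n. (\<Sum>J \<in> comps n. c J * Lcoef q J K) = SJ q (replicate n 1) K)" for c
  define c0 where "c0 J = (if J \<in> comps n then RHS q J else 0)" for J
  define c1 where "c1 J = (if J \<in> comps n then PTA q J else 0)" for J
  have uniq: "c = c'" if "P c" "P c'" for c c'
  proof
    fix J
    show "c J = c' J"
    proof (cases "J \<in> comps n")
      case False thus ?thesis using that by (simp add: P_def)
    next
      case True
      have "\<forall>K\<in>comps n. (\<Sum>J\<in>comps n. (c J - c' J) * Lcoef q J K) = 0"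
        using that by (simp add: P_def algebra_simps sum_subtractf)
      from uniq_zero[OF assms(1) n this True] show ?thesis by simp
    qed
  qed
  have P1: "P c1"
  proof -
    have "(\<Sum>J \<in> comps n. c1 J * Lcoef q J K) = SJ q (replicate n 1) K" if K: "K \<in> comps n" for K
    proof -
      have "(\<Sum>J \<in> comps n. c1 J * Lcoef q J K) = (\<Sum>J \<in> comps n. Lcoef q J K * G q J 0)"
        by (intro sum.cong refl) (simp add: c1_def PTA_G)
      also have "\<dots> = QFactA q K" using Fsum[OF assms(1) n K, of 0] by simp
      finally show ?thesis using SJ_QF[OF assms(1) n K] by simp
    qed
    thus ?thesis by (simp add: P_def c1_def)
  qed
  have P0: "P c0"
  proof -
    have R: "RHS q J = (\<Sum>J' \<in> comps n. Bc q J J' * QFactA q J')" if J: "J \<in> comps n" for J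
    proof -
      have sJ: "sum_list J = n" using J by (simp add: comps_def)
      have "RHS q J = (\<Sum>J' \<in> {J' \<in> comps n. finer J J'}. (- 1 / q) ^ (length J - length J') * (1 / q) ^ st' J J' * QFactA q J')"
        unfolding RHS_def sJ ..
      also have "\<dots> = (\<Sum>J' \<in> comps n. if finer J J' then (- 1 / q) ^ (length J - length J') * (1 / q) ^ st' J J' * QFactA q J' else 0)"
        by (rule sum.inter_filter) simp
      also have "\<dots> = (\<Sum>J' \<in> comps n. Bc q J J' * QFactA q J')"
        by (intro sum.cong refl) (simp add: Bc_def)
      finally show ?thesis .
    qed
    have "(\<Sum>J \<in> comps n. c0 J * Lcoef q J K) = SJ q (replicate n 1) K" if K: "K \<in> comps n" for K
    proof -
      have "(\<Sum>J \<in> comps n. c0 J * Lcoef q J K) = (\<Sum>J \<in> comps n. Lcoef q J K * (\<Sum>J' \<in> comps n. Bc q J J' * QFactA q J'))"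
        by (intro sum.cong refl) (simp add: c0_def R)
      also have "\<dots> = (\<Sum>J \<in> comps n. \<Sum>J' \<in> comps n. QFactA q J' * (Lcoef q J K * Bc q J J'))"
        by (simp add: sum_distrib_left mult_ac)
      also have "\<dots> = (\<Sum>J' \<in> comps n. \<Sum>J \<in> comps n. QFactA q J' * (Lcoef q J K * Bc q J J'))"
        by (rule sum.swap)
      also have "\<dots> = (\<Sum>J' \<in> comps n. QFactA q J' * (\<Sum>J \<in> comps n. Lcoef q J K * Bc q J J'))"
        by (simp add: sum_distrib_left)
      also have "\<dots> = (\<Sum>J' \<in> comps n. QFactA q J' * (if J' = K then 1 else 0))"
        by (intro sum.cong refl) (simp add: ABsum[OF assms(1) n K])
      also have "\<dots> = QFactA q K" using K by (simp add: if_distrib cong: if_cong)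
      finally show ?thesis using SJ_QF[OF assms(1) n K] by simp
    qed
    thus ?thesis by (simp add: P_def c0_def)
  qed
  have eAeq: "eA q I = (THE c. P c) I" unfolding eA_def P_def n_def Let_def ..
  have "(THE c. P c) = c0" using P0 uniq by (intro the_equality) auto
  moreover have "(THE c. P c) = c1" using P1 uniq by (intro the_equality) auto
  ultimately have "eA q I = c0 I" "eA q I = c1 I" using eAeq by auto
  thus ?thesis using I by (simp add: c0_def c1_def)
qed


end
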